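(* Let $(\mathcal{E},\mathcal{M})$ be an orthogonal factorization system on a category $\mathcal{D}$ with pullbacks, and let $\mathcal{A}$ be a category with a terminal object $1$. Let $\mathcal{E}'$ be the class of natural transformations $e$ between functors $\mathcal{A}\to\mathcal{D}$ such that $e_1\in\mathcal{E}$, and let $\mathcal{M}'$ be the class of cartesian natural transformations $m$ between functors $\mathcal{A}\to\mathcal{D}$ such that $m_1\in\mathcal{M}$. Then $(\mathcal{E}',\mathcal{M}')$ is an orthogonal factorization system on the functor category $[\mathcal{A},\mathcal{D}]$. Moreover, for every functor $G:\mathcal{A}\to\mathcal{D}$ there is an equivalence of categories $\mathcal{M}'/G \simeq \mathcal{M}/G1$.
   Context: An orthogonal factorization system $(\mathcal{E},\mathcal{M})$ on a category: both classes contain all isomorphisms and are closed under composition; for every commuting square $g\circ e = m\circ f$ with $e\in\mathcal{E}$, $m\in\mathcal{M}$ there is a unique $d$ with $d\circ e=f$ and $m\circ d=g$; every morphism factors as $m\circ e$ with $e\in\mathcal{E}$, $m\in\mathcal{M}$. A natural transformation is cartesian if all its naturality squares are pullbacks. For a class $\mathcal{N}$ of morphisms and an object $X$, $\mathcal{N}/X$ denotes the category whose objects are pairs $(S,s)$ with $s:S\to X$ in $\mathcal{N}$, and whose morphisms $(S,s)\to(S',s')$ are morphisms $f:S\to S'$ with $s'\circ f = s$. *)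

theory Defs
  imports Main
begin

record ('o, 'a) category =
  cobj  :: "'o set"
  carr  :: "'a set"
  cdom  :: "'a \<Rightarrow> 'o"
  ccod  :: "'a \<Rightarrow> 'o"
  cid   :: "'o \<Rightarrow> 'a"
  ccomp :: "'a \<Rightarrow> 'a \<Rightarrow> 'a"   (* ccomp C g f = g o f *)

definition is_category :: "('o, 'a) category \<Rightarrow> bool" where
  "is_category C \<longleftrightarrow>
     (\<forall>f\<in>carr C. cdom C f \<in> cobj C \<and> ccod C f \<in> cobj C) \<and>
     (\<forall>x\<in>cobj C. cid C x \<in> carr C \<and> cdom C (cid C x) = x \<and> ccod C (cid C x) = x) \<and>
     (\<forall>f\<in>carr C. \<forall>g\<in>carr C. ccod C f = cdom C g \<longrightarrow>
        ccomp C g f \<in> carr C \<and> cdom C (ccomp C g f) = cdom C f \<and> ccod C (ccomp C g f) = ccod C g) \<and>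
     (\<forall>f\<in>carr C. ccomp C (cid C (ccod C f)) f = f \<and> ccomp C f (cid C (cdom C f)) = f) \<and>
     (\<forall>f\<in>carr C. \<forall>g\<in>carr C. \<forall>h\<in>carr C. ccod C f = cdom C g \<and> ccod C g = cdom C h \<longrightarrow>
        ccomp C h (ccomp C g f) = ccomp C (ccomp C h g) f)"

definition is_iso :: "('o, 'a) category \<Rightarrow> 'a \<Rightarrow> bool" where
  "is_iso C f \<longleftrightarrow> f \<in> carr C \<and>
     (\<exists>g\<in>carr C. cdom C g = ccod C f \<and> ccod C g = cdom C f \<and>
        ccomp C g f = cid C (cdom C f) \<and> ccomp C f g = cid C (ccod C f))"

definition is_terminal :: "('o, 'a) category \<Rightarrow> 'o \<Rightarrow> bool" where
  "is_terminal C t \<longleftrightarrow> t \<in> cobj C \<and>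
     (\<forall>x\<in>cobj C. \<exists>!f. f \<in> carr C \<and> cdom C f = x \<and> ccod C f = t)"

definition is_pullback :: "('o, 'a) category \<Rightarrow> 'a \<Rightarrow> 'a \<Rightarrow> 'a \<Rightarrow> 'a \<Rightarrow> bool" where
  "is_pullback C f g p q \<longleftrightarrow>
     f \<in> carr C \<and> g \<in> carr C \<and> p \<in> carr C \<and> q \<in> carr C \<and>
     ccod C f = ccod C g \<and> cdom C p = cdom C q \<and>
     ccod C p = cdom C f \<and> ccod C q = cdom C g \<and>
     ccomp C f p = ccomp C g q \<and>
     (\<forall>a\<in>carr C. \<forall>b\<in>carr C.
        cdom C a = cdom C b \<and> ccod C a = cdom C f \<and> ccod C b = cdom C g \<and>
        ccomp C f a = ccomp C g b \<longrightarrow>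
        (\<exists>!u. u \<in> carr C \<and> cdom C u = cdom C a \<and> ccod C u = cdom C p \<and>
               ccomp C p u = a \<and> ccomp C q u = b))"

definition has_pullbacks :: "('o, 'a) category \<Rightarrow> bool" where
  "has_pullbacks C \<longleftrightarrow>
     (\<forall>f\<in>carr C. \<forall>g\<in>carr C. ccod C f = ccod C g \<longrightarrow> (\<exists>p q. is_pullback C f g p q))"

definition is_ofs :: "('o, 'a) category \<Rightarrow> 'a set \<Rightarrow> 'a set \<Rightarrow> bool" where
  "is_ofs C E M \<longleftrightarrow>
     E \<subseteq> carr C \<and> M \<subseteq> carr C \<and>
     (\<forall>f. is_iso C f \<longrightarrow> f \<in> E \<and> f \<in> M) \<and>
     (\<forall>f\<in>E. \<forall>g\<in>E. ccod C f = cdom C g \<longrightarrow> ccomp C g f \<in> E) \<and>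
     (\<forall>f\<in>M. \<forall>g\<in>M. ccod C f = cdom C g \<longrightarrow> ccomp C g f \<in> M) \<and>
     (\<forall>e\<in>E. \<forall>m\<in>M. \<forall>f\<in>carr C. \<forall>g\<in>carr C.
        cdom C f = cdom C e \<and> ccod C f = cdom C m \<and>
        cdom C g = ccod C e \<and> ccod C g = ccod C m \<and>
        ccomp C g e = ccomp C m f \<longrightarrow>
        (\<exists>!d. d \<in> carr C \<and> cdom C d = ccod C e \<and> ccod C d = cdom C m \<and>
               ccomp C d e = f \<and> ccomp C m d = g)) \<and>
     (\<forall>h\<in>carr C. \<exists>e\<in>E. \<exists>m\<in>M. ccod C e = cdom C m \<and> ccomp C m e = h)"

text \<open>Functor conditions on raw object/arrow maps (only values on the carriers matter).\<close>
definition functor_maps ::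
  "('o1, 'a1) category \<Rightarrow> ('o2, 'a2) category \<Rightarrow> ('o1 \<Rightarrow> 'o2) \<Rightarrow> ('a1 \<Rightarrow> 'a2) \<Rightarrow> bool" where
  "functor_maps C D Fo Fa \<longleftrightarrow>
     (\<forall>x\<in>cobj C. Fo x \<in> cobj D) \<and>
     (\<forall>f\<in>carr C. Fa f \<in> carr D \<and> cdom D (Fa f) = Fo (cdom C f) \<and> ccod D (Fa f) = Fo (ccod C f)) \<and>
     (\<forall>x\<in>cobj C. Fa (cid C x) = cid D (Fo x)) \<and>
     (\<forall>f\<in>carr C. \<forall>g\<in>carr C. ccod C f = cdom C g \<longrightarrow> Fa (ccomp C g f) = ccomp D (Fa g) (Fa f))"

text \<open>Functors as objects of a functor category: extensional pairs (object map, arrow map).\<close>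
definition is_functor ::
  "('o1, 'a1) category \<Rightarrow> ('o2, 'a2) category \<Rightarrow> ('o1 \<Rightarrow> 'o2) \<times> ('a1 \<Rightarrow> 'a2) \<Rightarrow> bool" where
  "is_functor C D F \<longleftrightarrow> functor_maps C D (fst F) (snd F) \<and>
     (\<forall>x. x \<notin> cobj C \<longrightarrow> fst F x = undefined) \<and>
     (\<forall>f. f \<notin> carr C \<longrightarrow> snd F f = undefined)"

definition nat_trans_maps ::
  "('o1, 'a1) category \<Rightarrow> ('o2, 'a2) category \<Rightarrow> ('o1 \<Rightarrow> 'o2) \<Rightarrow> ('a1 \<Rightarrow> 'a2)
     \<Rightarrow> ('o1 \<Rightarrow> 'o2) \<Rightarrow> ('a1 \<Rightarrow> 'a2) \<Rightarrow> ('o1 \<Rightarrow> 'a2) \<Rightarrow> bool" where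
  "nat_trans_maps C D Fo Fa Go Ga \<eta> \<longleftrightarrow>
     (\<forall>x\<in>cobj C. \<eta> x \<in> carr D \<and> cdom D (\<eta> x) = Fo x \<and> ccod D (\<eta> x) = Go x) \<and>
     (\<forall>f\<in>carr C. ccomp D (\<eta> (ccod C f)) (Fa f) = ccomp D (Ga f) (\<eta> (cdom C f)))"

definition nat_iso_maps ::
  "('o1, 'a1) category \<Rightarrow> ('o2, 'a2) category \<Rightarrow> ('o1 \<Rightarrow> 'o2) \<Rightarrow> ('a1 \<Rightarrow> 'a2)
     \<Rightarrow> ('o1 \<Rightarrow> 'o2) \<Rightarrow> ('a1 \<Rightarrow> 'a2) \<Rightarrow> ('o1 \<Rightarrow> 'a2) \<Rightarrow> bool" where
  "nat_iso_maps C D Fo Fa Go Ga \<eta> \<longleftrightarrow>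
     nat_trans_maps C D Fo Fa Go Ga \<eta> \<and> (\<forall>x\<in>cobj C. is_iso D (\<eta> x))"

definition equivalent_categories :: "('o1, 'a1) category \<Rightarrow> ('o2, 'a2) category \<Rightarrow> bool" where
  "equivalent_categories C D \<longleftrightarrow>
     (\<exists>Fo Fa Go Ga \<eta> \<epsilon>.
        functor_maps C D Fo Fa \<and> functor_maps D C Go Ga \<and>
        nat_iso_maps C C (\<lambda>x. x) (\<lambda>f. f) (Go \<circ> Fo) (Ga \<circ> Fa) \<eta> \<and>
        nat_iso_maps D D (Fo \<circ> Go) (Fa \<circ> Ga) (\<lambda>x. x) (\<lambda>f. f) \<epsilon>)"

type_synonym ('oA, 'aA, 'oD, 'aD) functor_rep = "('oA \<Rightarrow> 'oD) \<times> ('aA \<Rightarrow> 'aD)"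
type_synonym ('oA, 'aA, 'oD, 'aD) nat_rep =
  "('oA, 'aA, 'oD, 'aD) functor_rep \<times> ('oA, 'aA, 'oD, 'aD) functor_rep \<times> ('oA \<Rightarrow> 'aD)"

text \<open>The functor category [A, D]: objects are functors; arrows are triples
  (source, target, extensional family of components).\<close>
definition functor_cat ::
  "('oA, 'aA) category \<Rightarrow> ('oD, 'aD) category \<Rightarrow>
     (('oA, 'aA, 'oD, 'aD) functor_rep, ('oA, 'aA, 'oD, 'aD) nat_rep) category" where
  "functor_cat A D =
     \<lparr> cobj = {F. is_functor A D F},
       carr = {(F, G, \<eta>). is_functor A D F \<and> is_functor A D G \<and>
                 nat_trans_maps A D (fst F) (snd F) (fst G) (snd G) \<eta> \<and>
                 (\<forall>x. x \<notin> cobj A \<longrightarrow> \<eta> x = undefined)},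
       cdom = (\<lambda>(F, G, \<eta>). F),
       ccod = (\<lambda>(F, G, \<eta>). G),
       cid = (\<lambda>F. (F, F, \<lambda>x. if x \<in> cobj A then cid D (fst F x) else undefined)),
       ccomp = (\<lambda>(G', H, \<theta>) (F, G, \<eta>).
                  (F, H, \<lambda>x. if x \<in> cobj A then ccomp D (\<theta> x) (\<eta> x) else undefined)) \<rparr>"

definition cartesian_nat_trans ::
  "('oA, 'aA) category \<Rightarrow> ('oD, 'aD) category \<Rightarrow> ('oA, 'aA, 'oD, 'aD) nat_rep \<Rightarrow> bool" where
  "cartesian_nat_trans A D \<tau> \<longleftrightarrow>
     (case \<tau> of (F, G, \<eta>) \<Rightarrow>
        (\<forall>u\<in>carr A. is_pullback D (\<eta> (ccod A u)) (snd G u) (snd F u) (\<eta> (cdom A u))))"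

definition lifted_E ::
  "('oA, 'aA) category \<Rightarrow> ('oD, 'aD) category \<Rightarrow> 'oA \<Rightarrow> 'aD set
     \<Rightarrow> ('oA, 'aA, 'oD, 'aD) nat_rep set" where
  "lifted_E A D t E = {\<tau> \<in> carr (functor_cat A D). (snd (snd \<tau>)) t \<in> E}"

definition lifted_M ::
  "('oA, 'aA) category \<Rightarrow> ('oD, 'aD) category \<Rightarrow> 'oA \<Rightarrow> 'aD set
     \<Rightarrow> ('oA, 'aA, 'oD, 'aD) nat_rep set" where
  "lifted_M A D t M = {\<tau> \<in> carr (functor_cat A D).
      cartesian_nat_trans A D \<tau> \<and> (snd (snd \<tau>)) t \<in> M}"

definition slice :: "('o, 'a) category \<Rightarrow> 'a set \<Rightarrow> 'o \<Rightarrow>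
     ('o \<times> 'a, ('o \<times> 'a) \<times> ('o \<times> 'a) \<times> 'a) category" where
  "slice C N X =
     \<lparr> cobj = {(S, s). s \<in> N \<and> cdom C s = S \<and> ccod C s = X},
       carr = {((S, s), (S', s'), f). s \<in> N \<and> cdom C s = S \<and> ccod C s = X \<and>
                 s' \<in> N \<and> cdom C s' = S' \<and> ccod C s' = X \<and>
                 f \<in> carr C \<and> cdom C f = S \<and> ccod C f = S' \<and> ccomp C s' f = s},
       cdom = (\<lambda>(a, b, f). a),
       ccod = (\<lambda>(a, b, f). b),
       cid = (\<lambda>(S, s). ((S, s), (S, s), cid C S)),
       ccomp = (\<lambda>(b', c, g) (a, b, f). (a, c, ccomp C g f)) \<rparr>"

end

theory Submission
  imports Defs
begin

locale cat =
  fixes C :: "('o,'a) category"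
  assumes is_cat: "is_category C"
begin

abbreviation "Ob \<equiv> cobj C"
abbreviation "Ar \<equiv> carr C"
abbreviation "dm \<equiv> cdom C"
abbreviation "cd \<equiv> ccod C"
abbreviation "idc \<equiv> cid C"
abbreviation "cp \<equiv> ccomp C"

lemma dm_obj[simp]: "f \<in> Ar \<Longrightarrow> dm f \<in> Ob"
  using is_cat unfolding is_category_def by blast
lemma cd_obj[simp]: "f \<in> Ar \<Longrightarrow> cd f \<in> Ob"
  using is_cat unfolding is_category_def by blast
lemma id_arr[simp]: "X \<in> Ob \<Longrightarrow> idc X \<in> Ar"
  using is_cat unfolding is_category_def by blast
lemma id_dm[simp]: "X \<in> Ob \<Longrightarrow> dm (idc X) = X"
  using is_cat unfolding is_category_def by blast
lemma id_cd[simp]: "X \<in> Ob \<Longrightarrow> cd (idc X) = X"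
  using is_cat unfolding is_category_def by blast
lemma comp_arr[simp]: "f \<in> Ar \<Longrightarrow> g \<in> Ar \<Longrightarrow> cd f = dm g \<Longrightarrow> cp g f \<in> Ar"
  using is_cat unfolding is_category_def by blast
lemma comp_dm[simp]: "f \<in> Ar \<Longrightarrow> g \<in> Ar \<Longrightarrow> cd f = dm g \<Longrightarrow> dm (cp g f) = dm f"
  using is_cat unfolding is_category_def by blast
lemma comp_cd[simp]: "f \<in> Ar \<Longrightarrow> g \<in> Ar \<Longrightarrow> cd f = dm g \<Longrightarrow> cd (cp g f) = cd g"
  using is_cat unfolding is_category_def by blast
lemma id_l[simp]: "f \<in> Ar \<Longrightarrow> cd f = Y \<Longrightarrow> cp (idc Y) f = f"
  using is_cat unfolding is_category_def by blast
lemma id_r[simp]: "f \<in> Ar \<Longrightarrow> dm f = X \<Longrightarrow> cp f (idc X) = f"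
  using is_cat unfolding is_category_def by blast
lemma assoc: "f \<in> Ar \<Longrightarrow> g \<in> Ar \<Longrightarrow> h \<in> Ar \<Longrightarrow> cd f = dm g \<Longrightarrow> cd g = dm h \<Longrightarrow>
   cp h (cp g f) = cp (cp h g) f"
  using is_cat unfolding is_category_def by blast

lemma iso_intro: "f \<in> Ar \<Longrightarrow> g \<in> Ar \<Longrightarrow> dm g = cd f \<Longrightarrow> cd g = dm f \<Longrightarrow>
   cp g f = idc (dm f) \<Longrightarrow> cp f g = idc (cd f) \<Longrightarrow> is_iso C f"
  unfolding is_iso_def by blast

definition iv where
  "iv f = (SOME g. g \<in> Ar \<and> dm g = cd f \<and> cd g = dm f \<and> cp g f = idc (dm f) \<and> cp f g = idc (cd f))"

lemma iv: assumes "is_iso C f"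
  shows "iv f \<in> Ar \<and> dm (iv f) = cd f \<and> cd (iv f) = dm f \<and> cp (iv f) f = idc (dm f) \<and> cp f (iv f) = idc (cd f)"
proof -
  from assms obtain g where "g \<in> Ar \<and> dm g = cd f \<and> cd g = dm f \<and> cp g f = idc (dm f) \<and> cp f g = idc (cd f)"
    unfolding is_iso_def by blast
  then show ?thesis unfolding iv_def by (rule someI)
qed

lemma iso_arr: "is_iso C f \<Longrightarrow> f \<in> Ar"
  unfolding is_iso_def by blast

lemma iso_mono:
  assumes "is_iso C f" "a \<in> Ar" "b \<in> Ar" "cd a = dm f" "cd b = dm f" "cp f a = cp f b"
  shows "a = b"
proof -
  have f: "f \<in> Ar" using assms iso_arr by blast
  note i = iv[OF assms(1)]
  have "a = cp (cp (iv f) f) a" using i assms by simp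
  also have "\<dots> = cp (iv f) (cp f a)" using i assms f by (intro assoc[symmetric]) auto
  also have "\<dots> = cp (iv f) (cp f b)" using assms by simp
  also have "\<dots> = cp (cp (iv f) f) b" using i assms f by (intro assoc) auto
  also have "\<dots> = b" using i assms by simp
  finally show ?thesis .
qed

lemma id_iso: "X \<in> Ob \<Longrightarrow> is_iso C (idc X)"
  by (rule iso_intro[where g="idc X"]) auto

lemma iso_comp: assumes "is_iso C f" "is_iso C g" "cd f = dm g" shows "is_iso C (cp g f)"
proof -
  note i = iv[OF assms(1)] and j = iv[OF assms(2)]
  have f: "f \<in> Ar" and g: "g \<in> Ar" using assms iso_arr by auto
  show ?thesis
  proof (rule iso_intro[where g="cp (iv f) (iv g)"])
    have "cp (cp (iv f) (iv g)) (cp g f) = cp (iv f) (cp (iv g) (cp g f))"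
      using i j f g assms by (intro assoc[symmetric]) auto
    also have "\<dots> = cp (iv f) (cp (cp (iv g) g) f)"
      using i j f g assms by (subst assoc) auto
    also have "\<dots> = idc (dm (cp g f))" using i j f g assms by simp
    finally show "cp (cp (iv f) (iv g)) (cp g f) = idc (dm (cp g f))" .
    have "cp (cp g f) (cp (iv f) (iv g)) = cp g (cp f (cp (iv f) (iv g)))"
      using i j f g assms by (intro assoc[symmetric]) auto
    also have "\<dots> = cp g (cp (cp f (iv f)) (iv g))"
      using i j f g assms by (subst assoc) auto
    also have "\<dots> = idc (cd (cp g f))" using i j f g assms by simp
    finally show "cp (cp g f) (cp (iv f) (iv g)) = idc (cd (cp g f))" .
  qed (use i j f g assms in auto)
qed

lemma iv_iso: assumes "is_iso C f" shows "is_iso C (iv f)"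
  using iv[OF assms] iso_arr[OF assms] by (intro iso_intro[where g=f]) auto

end


context cat
begin

definition pbind where
  "pbind f g p q a b = (THE u. u \<in> Ar \<and> dm u = dm a \<and> cd u = dm p \<and> cp p u = a \<and> cp q u = b)"

lemma pb_facts: assumes "is_pullback C f g p q"
  shows "f \<in> Ar" "g \<in> Ar" "p \<in> Ar" "q \<in> Ar" "cd f = cd g" "dm p = dm q" "cd p = dm f" "cd q = dm g"
    "cp f p = cp g q"
  using assms unfolding is_pullback_def by simp_all

lemma pbind: assumes "is_pullback C f g p q" "a \<in> Ar" "b \<in> Ar" "dm a = dm b" "cd a = dm f" "cd b = dm g"
   "cp f a = cp g b"
  shows "pbind f g p q a b \<in> Ar" "dm (pbind f g p q a b) = dm a" "cd (pbind f g p q a b) = dm p"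
    "cp p (pbind f g p q a b) = a" "cp q (pbind f g p q a b) = b"
proof -
  have "\<exists>!u. u \<in> Ar \<and> dm u = dm a \<and> cd u = dm p \<and> cp p u = a \<and> cp q u = b"
    using assms unfolding is_pullback_def by blast
  then have "pbind f g p q a b \<in> Ar \<and> dm (pbind f g p q a b) = dm a \<and> cd (pbind f g p q a b) = dm p \<and>
    cp p (pbind f g p q a b) = a \<and> cp q (pbind f g p q a b) = b"
    unfolding pbind_def by (rule theI')
  then show "pbind f g p q a b \<in> Ar" "dm (pbind f g p q a b) = dm a" "cd (pbind f g p q a b) = dm p"
    "cp p (pbind f g p q a b) = a" "cp q (pbind f g p q a b) = b" by simp_all
qed

lemma pbind_unique: assumes "is_pullback C f g p q" "a \<in> Ar" "b \<in> Ar" "dm a = dm b" "cd a = dm f" "cd b = dm g"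
   "cp f a = cp g b" "u \<in> Ar" "dm u = dm a" "cd u = dm p" "cp p u = a" "cp q u = b"
 shows "u = pbind f g p q a b"
proof -
  have "\<exists>!u. u \<in> Ar \<and> dm u = dm a \<and> cd u = dm p \<and> cp p u = a \<and> cp q u = b"
    using assms unfolding is_pullback_def by blast
  then show ?thesis using assms pbind[OF assms(1-7)] by blast
qed

lemma pb_unique: assumes pb: "is_pullback C f g p q" and "u \<in> Ar" "v \<in> Ar" "dm u = dm v" "cd u = dm p" "cd v = dm p"
   "cp p u = cp p v" "cp q u = cp q v"
  shows "u = v"
proof -
  note F = pb_facts[OF pb]
  have sq: "cp f (cp p u) = cp g (cp q u)"
  proof -
    have "cp f (cp p u) = cp (cp f p) u" using F assms by (intro assoc) simp_all
    also have "\<dots> = cp (cp g q) u" using F by simp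
    also have "\<dots> = cp g (cp q u)" using F assms by (intro assoc[symmetric]) simp_all
    finally show ?thesis .
  qed
  have "u = pbind f g p q (cp p u) (cp q u)"
    by (rule pbind_unique[OF pb]) (use F assms sq in simp_all)
  moreover have "v = pbind f g p q (cp p u) (cp q u)"
    by (rule pbind_unique[OF pb]) (use F assms sq in simp_all)
  ultimately show ?thesis by simp
qed

lemma pb_intro:
  assumes "f \<in> Ar" "g \<in> Ar" "p \<in> Ar" "q \<in> Ar" "cd f = cd g" "dm p = dm q" "cd p = dm f" "cd q = dm g"
    "cp f p = cp g q"
    and ex: "\<And>a b. a \<in> Ar \<Longrightarrow> b \<in> Ar \<Longrightarrow> dm a = dm b \<Longrightarrow> cd a = dm f \<Longrightarrow> cd b = dm g \<Longrightarrow>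
       cp f a = cp g b \<Longrightarrow> \<exists>u. u \<in> Ar \<and> dm u = dm a \<and> cd u = dm p \<and> cp p u = a \<and> cp q u = b"
    and un: "\<And>u v. u \<in> Ar \<Longrightarrow> v \<in> Ar \<Longrightarrow> dm u = dm v \<Longrightarrow> cd u = dm p \<Longrightarrow> cd v = dm p \<Longrightarrow>
       cp p u = cp p v \<Longrightarrow> cp q u = cp q v \<Longrightarrow> u = v"
  shows "is_pullback C f g p q"
  unfolding is_pullback_def
proof (intro conjI ballI impI)
  fix a b assume H: "a \<in> Ar" "b \<in> Ar" "dm a = dm b \<and> cd a = dm f \<and> cd b = dm g \<and> cp f a = cp g b"
  then obtain u where u: "u \<in> Ar \<and> dm u = dm a \<and> cd u = dm p \<and> cp p u = a \<and> cp q u = b"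
    using ex by blast
  show "\<exists>!u. u \<in> Ar \<and> dm u = dm a \<and> cd u = dm p \<and> cp p u = a \<and> cp q u = b"
  proof (rule ex1I[of _ u])
    show "u \<in> Ar \<and> dm u = dm a \<and> cd u = dm p \<and> cp p u = a \<and> cp q u = b" by (rule u)
    fix v assume "v \<in> Ar \<and> dm v = dm a \<and> cd v = dm p \<and> cp p v = a \<and> cp q v = b"
    then show "v = u" using u un by simp_all
  qed
qed (use assms in simp_all)

lemma pb_iso:
  assumes "f \<in> Ar" "g \<in> Ar" "p \<in> Ar" "q \<in> Ar" "cd f = cd g" "dm p = dm q" "cd p = dm f" "cd q = dm g"
    "cp f p = cp g q" "is_iso C f" "is_iso C q"
  shows "is_pullback C f g p q"
proof (rule pb_intro)
  note i = iv[OF assms(11)]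
  fix a b assume H: "a \<in> Ar" "b \<in> Ar" "dm a = dm b" "cd a = dm f" "cd b = dm g" "cp f a = cp g b"
  define u where "u = cp (iv q) b"
  have uA: "u \<in> Ar" "dm u = dm a" "cd u = dm p" unfolding u_def using i H assms by simp_all
  have qu: "cp q u = b"
  proof -
    have "cp q u = cp (cp q (iv q)) b" unfolding u_def using i H assms by (intro assoc) simp_all
    also have "\<dots> = b" using i H assms by simp
    finally show ?thesis .
  qed
  have eq: "cp f (cp p u) = cp f a"
  proof -
    have "cp f (cp p u) = cp (cp f p) u" using assms uA by (intro assoc) simp_all
    also have "\<dots> = cp (cp g q) u" using assms by simp
    also have "\<dots> = cp g (cp q u)" using assms uA by (intro assoc[symmetric]) simp_all
    finally show ?thesis using qu H by simp
  qed
  have "cp p u = a" by (rule iso_mono[OF assms(10) _ _ _ _ eq]) (use assms uA H in simp_all)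
  then show "\<exists>u. u \<in> Ar \<and> dm u = dm a \<and> cd u = dm p \<and> cp p u = a \<and> cp q u = b"
    using qu uA by blast
next
  fix u v assume "u \<in> Ar" "v \<in> Ar" "dm u = dm v" "cd u = dm p" "cd v = dm p" "cp p u = cp p v" "cp q u = cp q v"
  then show "u = v" by - (rule iso_mono[OF assms(11)], use assms in simp_all)
qed (use assms in simp_all)

lemma pb_paste:
  assumes P1: "is_pullback C f g p q" and P2: "is_pullback C f' p p' q'"
  shows "is_pullback C (cp f f') g p' (cp q q')"
proof -
  note F = pb_facts[OF P1] and G = pb_facts[OF P2]
  show ?thesis
  proof (rule pb_intro)
    show "cp (cp f f') p' = cp g (cp q q')"
    proof -
      have "cp (cp f f') p' = cp f (cp f' p')" using F G by (intro assoc[symmetric]) simp_all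
      also have "\<dots> = cp f (cp p q')" using G by simp
      also have "\<dots> = cp (cp f p) q'" using F G by (intro assoc) simp_all
      also have "\<dots> = cp (cp g q) q'" using F by simp
      also have "\<dots> = cp g (cp q q')" using F G by (intro assoc[symmetric]) simp_all
      finally show ?thesis .
    qed
  next
    fix a b assume H: "a \<in> Ar" "b \<in> Ar" "dm a = dm b" "cd a = dm (cp f f')" "cd b = dm g" "cp (cp f f') a = cp g b"
    have cda: "cd a = dm f'" using H F G by simp
    have e1: "cp f (cp f' a) = cp g b"
    proof -
      have "cp f (cp f' a) = cp (cp f f') a" using H F G cda by (intro assoc) simp_all
      then show ?thesis using H by simp
    qed
    define v where "v = pbind f g p q (cp f' a) b"
    note V = pbind[OF P1, of "cp f' a" b, folded v_def]
    have V': "v \<in> Ar" "dm v = dm a" "cd v = dm p" "cp p v = cp f' a" "cp q v = b"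
      using V H F G cda e1 by simp_all
    define w where "w = pbind f' p p' q' a v"
    note W = pbind[OF P2, of a v, folded w_def]
    have W': "w \<in> Ar" "dm w = dm a" "cd w = dm p'" "cp p' w = a" "cp q' w = v"
      using W H F G cda V' by simp_all
    have "cp (cp q q') w = cp q (cp q' w)" using W' V' F G by (intro assoc[symmetric]) simp_all
    then have "cp (cp q q') w = b" using W' V' by simp
    then show "\<exists>u. u \<in> Ar \<and> dm u = dm a \<and> cd u = dm p' \<and> cp p' u = a \<and> cp (cp q q') u = b"
      using W' by blast
  next
    fix u v assume H: "u \<in> Ar" "v \<in> Ar" "dm u = dm v" "cd u = dm p'" "cd v = dm p'" "cp p' u = cp p' v"
      "cp (cp q q') u = cp (cp q q') v"
    have "cp q (cp q' u) = cp q (cp q' v)"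
    proof -
      have "cp q (cp q' u) = cp (cp q q') u" using H F G by (intro assoc) simp_all
      also have "\<dots> = cp (cp q q') v" using H by simp
      also have "\<dots> = cp q (cp q' v)" using H F G by (intro assoc[symmetric]) simp_all
      finally show ?thesis .
    qed
    moreover have "cp p (cp q' u) = cp p (cp q' v)"
    proof -
      have "cp p (cp q' u) = cp (cp p q') u" using H F G by (intro assoc) simp_all
      also have "\<dots> = cp (cp f' p') u" using G by simp
      also have "\<dots> = cp f' (cp p' u)" using H F G by (intro assoc[symmetric]) simp_all
      also have "\<dots> = cp f' (cp p' v)" using H by simp
      also have "\<dots> = cp (cp f' p') v" using H F G by (intro assoc) simp_all
      also have "\<dots> = cp (cp p q') v" using G by simp
      also have "\<dots> = cp p (cp q' v)" using H F G by (intro assoc[symmetric]) simp_all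
      finally show ?thesis .
    qed
    ultimately have "cp q' u = cp q' v"
      by - (rule pb_unique[OF P1], use H F G in simp_all)
    then show "u = v" by - (rule pb_unique[OF P2], use H F G in simp_all)
  qed (use F G in simp_all)
qed

lemma pb_cancel0:
  assumes P1: "is_pullback C f g p q" and P2: "is_pullback C f (cp g g') (cp p w) q'"
    and g': "g' \<in> Ar" "cd g' = dm g"
    and w: "w \<in> Ar" "cd w = dm p" "cp q w = cp g' q'"
  shows "is_pullback C q g' w q'"
proof -
  note F = pb_facts[OF P1] and G = pb_facts[OF P2]
  have cdq': "cd q' = dm g'" using G F g' by simp
  have dw: "dm w = dm q'" using G F w by simp
  show ?thesis
  proof (rule pb_intro)
    fix a b assume H: "a \<in> Ar" "b \<in> Ar" "dm a = dm b" "cd a = dm q" "cd b = dm g'" "cp q a = cp g' b"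
    have e: "cp f (cp p a) = cp (cp g g') b"
    proof -
      have "cp f (cp p a) = cp (cp f p) a" using H F by (intro assoc) simp_all
      also have "\<dots> = cp (cp g q) a" using F by simp
      also have "\<dots> = cp g (cp q a)" using H F by (intro assoc[symmetric]) simp_all
      also have "\<dots> = cp g (cp g' b)" using H by simp
      also have "\<dots> = cp (cp g g') b" using H F g' by (intro assoc) simp_all
      finally show ?thesis .
    qed
    define v where "v = pbind f (cp g g') (cp p w) q' (cp p a) b"
    note V = pbind[OF P2, of "cp p a" b, folded v_def]
    have V': "v \<in> Ar" "dm v = dm a" "cd v = dm w" "cp (cp p w) v = cp p a" "cp q' v = b"
      using V H F G g' e w by simp_all
    have "cp w v = a"
    proof (rule pb_unique[OF P1])
      show "cp p (cp w v) = cp p a"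
      proof -
        have "cp p (cp w v) = cp (cp p w) v" using V' w F by (intro assoc) simp_all
        then show ?thesis using V'(4) by simp
      qed
      show "cp q (cp w v) = cp q a"
      proof -
        have "cp q (cp w v) = cp (cp q w) v" using V' w F by (intro assoc) simp_all
        also have "\<dots> = cp (cp g' q') v" using w(3) by simp
        also have "\<dots> = cp g' (cp q' v)" using V' g' cdq' dw w G by (intro assoc[symmetric]) simp_all
        also have "\<dots> = cp q a" using V' H by simp
        finally show ?thesis .
      qed
    qed (use V' w H F in simp_all)
    then show "\<exists>u. u \<in> Ar \<and> dm u = dm a \<and> cd u = dm w \<and> cp w u = a \<and> cp q' u = b"
      using V' by blast
  next
    fix u v assume H: "u \<in> Ar" "v \<in> Ar" "dm u = dm v" "cd u = dm w" "cd v = dm w" "cp w u = cp w v"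
      "cp q' u = cp q' v"
    have "cp (cp p w) u = cp (cp p w) v"
    proof -
      have "cp (cp p w) u = cp p (cp w u)" using H w F by (intro assoc[symmetric]) simp_all
      also have "\<dots> = cp p (cp w v)" using H by simp
      also have "\<dots> = cp (cp p w) v" using H w F by (intro assoc) simp_all
      finally show ?thesis .
    qed
    then show "u = v" by - (rule pb_unique[OF P2], use H G w dw in simp_all)
  qed (use F G g' w cdq' dw in simp_all)
qed

lemma pb_cancel:
  assumes P1: "is_pullback C f g p q" and P2: "is_pullback C f (cp g g') p'' q'"
    and g': "g' \<in> Ar" "cd g' = dm g"
    and w: "w \<in> Ar" "cd w = dm p" "cp p w = p''" "cp q w = cp g' q'"
  shows "is_pullback C q g' w q'"
proof -
  from P2 w(3) have "is_pullback C f (cp g g') (cp p w) q'" by simp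
  from pb_cancel0[OF P1 this g' w(1,2,4)] show ?thesis .
qed

lemma pb_id: assumes "m \<in> Ar" shows "is_pullback C m (idc (cd m)) (idc (dm m)) m"
proof (rule pb_intro)
  fix a b assume H: "a \<in> Ar" "b \<in> Ar" "dm a = dm b" "cd a = dm m" "cd b = dm (idc (cd m))" "cp m a = cp (idc (cd m)) b"
  then show "\<exists>u. u \<in> Ar \<and> dm u = dm a \<and> cd u = dm (idc (dm m)) \<and> cp (idc (dm m)) u = a \<and> cp m u = b"
    using assms by (intro exI[of _ a]) simp_all
qed (use assms in simp_all)

lemma pb_compare_iso:
  assumes P1: "is_pullback C f g p q" and P2: "is_pullback C f g p' q'"
    and w: "w \<in> Ar" "dm w = dm p'" "cd w = dm p" "cp p w = p'" "cp q w = q'"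
  shows "is_iso C w"
proof -
  note F = pb_facts[OF P1] and G = pb_facts[OF P2]
  define v where "v = pbind f g p' q' p q"
  note V = pbind[OF P2, of p q, folded v_def]
  have V': "v \<in> Ar" "dm v = dm p" "cd v = dm p'" "cp p' v = p" "cp q' v = q"
    using V F G by simp_all
  have a1: "cp p (cp w v) = cp p (idc (dm p))"
  proof -
    have "cp p (cp w v) = cp (cp p w) v" using V' w F by (intro assoc) simp_all
    then show ?thesis using V' w F by simp
  qed
  have a2: "cp q (cp w v) = cp q (idc (dm p))"
  proof -
    have "cp q (cp w v) = cp (cp q w) v" using V' w F by (intro assoc) simp_all
    then show ?thesis using V' w F by simp
  qed
  have 1: "cp w v = idc (dm p)"
    by (rule pb_unique[OF P1]) (use V' w F a1 a2 in simp_all)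
  have b1: "cp p' (cp v w) = cp p' (idc (dm p'))"
  proof -
    have "cp p' (cp v w) = cp (cp p' v) w" using V' w G by (intro assoc) simp_all
    then show ?thesis using V' w G by simp
  qed
  have b2: "cp q' (cp v w) = cp q' (idc (dm p'))"
  proof -
    have "cp q' (cp v w) = cp (cp q' v) w" using V' w G by (intro assoc) simp_all
    then show ?thesis using V' w G by simp
  qed
  have 2: "cp v w = idc (dm p')"
    by (rule pb_unique[OF P2]) (use V' w G b1 b2 in simp_all)
  show ?thesis using 1 2 V' w by (intro iso_intro[where g=v]) simp_all
qed

lemma slice_iso:
  assumes "((S,s),(S',s'),f) \<in> carr (slice C N X)" "is_iso C f" "N \<subseteq> Ar"
  shows "is_iso (slice C N X) ((S,s),(S',s'),f)"
proof -
  note i = iv[OF assms(2)]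
  have H: "s \<in> N" "dm s = S" "cd s = X" "s' \<in> N" "dm s' = S'" "cd s' = X" "f \<in> Ar" "dm f = S" "cd f = S'"
    "cp s' f = s"
  proof -
    from assms(1) have "s \<in> N \<and> dm s = S \<and> cd s = X \<and> s' \<in> N \<and> dm s' = S' \<and> cd s' = X \<and>
        f \<in> Ar \<and> dm f = S \<and> cd f = S' \<and> cp s' f = s"
      by (simp only: slice_def category.simps mem_Collect_eq case_prod_conv)
    then show "s \<in> N" "dm s = S" "cd s = X" "s' \<in> N" "dm s' = S'" "cd s' = X" "f \<in> Ar" "dm f = S" "cd f = S'"
    "cp s' f = s" by blast+
  qed
  have sA: "s \<in> Ar" "s' \<in> Ar" using H assms(3) by blast+
  have "cp s (iv f) = s'"
  proof -
    have "cp s (iv f) = cp (cp s' f) (iv f)" using H by simp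
    also have "\<dots> = cp s' (cp f (iv f))" using H sA i by (intro assoc[symmetric]) simp_all
    also have "\<dots> = s'" using H sA i by simp
    finally show ?thesis .
  qed
  then have g: "((S',s'),(S,s),iv f) \<in> carr (slice C N X)"
    using H i \<open>cp s (iv f) = s'\<close> sA by (simp add: slice_def)
  have e1: "ccomp (slice C N X) ((S',s'),(S,s),iv f) ((S,s),(S',s'),f) = cid (slice C N X) (S,s)"
    using H i by (simp add: slice_def)
  have e2: "ccomp (slice C N X) ((S,s),(S',s'),f) ((S',s'),(S,s),iv f) = cid (slice C N X) (S',s')"
    using H i by (simp add: slice_def)
  show ?thesis unfolding is_iso_def
    apply (rule conjI, rule assms(1))
    apply (rule bexI[OF _ g])
    using e1 e2 by (simp add: slice_def)
qed

end


locale ctx = D: cat D + A: cat A for D :: "('oD,'aD) category" and A :: "('oA,'aA) category" +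
  fixes t :: 'oA
  assumes trm: "is_terminal A t"
begin

abbreviation "FC \<equiv> functor_cat A D"
abbreviation "isF F \<equiv> is_functor A D F"
abbreviation "NT F G \<eta> \<equiv> (F, G, \<eta>) \<in> carr FC"

lemma F_obj[simp]: "isF F \<Longrightarrow> x \<in> A.Ob \<Longrightarrow> fst F x \<in> D.Ob"
  unfolding is_functor_def functor_maps_def by blast
lemma F_arr[simp]: "isF F \<Longrightarrow> u \<in> A.Ar \<Longrightarrow> snd F u \<in> D.Ar"
  unfolding is_functor_def functor_maps_def by blast
lemma F_dm[simp]: "isF F \<Longrightarrow> u \<in> A.Ar \<Longrightarrow> D.dm (snd F u) = fst F (A.dm u)"
  unfolding is_functor_def functor_maps_def by blast
lemma F_cd[simp]: "isF F \<Longrightarrow> u \<in> A.Ar \<Longrightarrow> D.cd (snd F u) = fst F (A.cd u)"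
  unfolding is_functor_def functor_maps_def by blast
lemma F_id[simp]: "isF F \<Longrightarrow> x \<in> A.Ob \<Longrightarrow> snd F (A.idc x) = D.idc (fst F x)"
  unfolding is_functor_def functor_maps_def by blast
lemma F_comp: "isF F \<Longrightarrow> u \<in> A.Ar \<Longrightarrow> v \<in> A.Ar \<Longrightarrow> A.cd u = A.dm v \<Longrightarrow>
   snd F (A.cp v u) = D.cp (snd F v) (snd F u)"
  unfolding is_functor_def functor_maps_def by blast
lemma F_ext_o: "isF F \<Longrightarrow> x \<notin> A.Ob \<Longrightarrow> fst F x = undefined"
  unfolding is_functor_def by blast
lemma F_ext_a: "isF F \<Longrightarrow> u \<notin> A.Ar \<Longrightarrow> snd F u = undefined"
  unfolding is_functor_def by blast

lemma FC_Ob[simp]: "cobj FC = {F. isF F}"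
  by (simp add: functor_cat_def)
lemma FC_dm[simp]: "cdom FC (F, G, \<eta>) = F"
  by (simp add: functor_cat_def)
lemma FC_cd[simp]: "ccod FC (F, G, \<eta>) = G"
  by (simp add: functor_cat_def)
lemma FC_id: "cid FC F = (F, F, \<lambda>x. if x \<in> A.Ob then D.idc (fst F x) else undefined)"
  by (simp add: functor_cat_def)
lemma FC_comp[simp]: "ccomp FC (G', H, \<theta>) (F, G, \<eta>) = (F, H, \<lambda>x. if x \<in> A.Ob then D.cp (\<theta> x) (\<eta> x) else undefined)"
  by (simp add: functor_cat_def)

lemma NT_iff: "NT F G \<eta> \<longleftrightarrow> isF F \<and> isF G \<and> nat_trans_maps A D (fst F) (snd F) (fst G) (snd G) \<eta> \<and>
    (\<forall>x. x \<notin> A.Ob \<longrightarrow> \<eta> x = undefined)"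
  by (simp add: functor_cat_def)

lemma NT_D: assumes "NT F G \<eta>"
  shows "isF F \<and> isF G \<and> (\<forall>x\<in>A.Ob. \<eta> x \<in> D.Ar \<and> D.dm (\<eta> x) = fst F x \<and> D.cd (\<eta> x) = fst G x) \<and>
     (\<forall>u\<in>A.Ar. D.cp (\<eta> (A.cd u)) (snd F u) = D.cp (snd G u) (\<eta> (A.dm u))) \<and>
     (\<forall>x. x \<notin> A.Ob \<longrightarrow> \<eta> x = undefined)"
  using assms unfolding NT_iff nat_trans_maps_def by (elim conjE) (intro conjI)

lemma NT_F: "NT F G \<eta> \<Longrightarrow> isF F" by (drule NT_D) (elim conjE)
lemma NT_G: "NT F G \<eta> \<Longrightarrow> isF G" by (drule NT_D) (elim conjE)
lemma NT_arr[simp]: "NT F G \<eta> \<Longrightarrow> x \<in> A.Ob \<Longrightarrow> \<eta> x \<in> D.Ar"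
  by (drule NT_D) (elim conjE, drule bspec, assumption, elim conjE)
lemma NT_dm[simp]: "NT F G \<eta> \<Longrightarrow> x \<in> A.Ob \<Longrightarrow> D.dm (\<eta> x) = fst F x"
  by (drule NT_D) (elim conjE, drule bspec, assumption, elim conjE)
lemma NT_cd[simp]: "NT F G \<eta> \<Longrightarrow> x \<in> A.Ob \<Longrightarrow> D.cd (\<eta> x) = fst G x"
  by (drule NT_D) (elim conjE, drule bspec, assumption, elim conjE)
lemma NT_nat: "NT F G \<eta> \<Longrightarrow> u \<in> A.Ar \<Longrightarrow> D.cp (\<eta> (A.cd u)) (snd F u) = D.cp (snd G u) (\<eta> (A.dm u))"
  by (drule NT_D) (elim conjE, drule bspec, assumption)
lemma NT_ext: "NT F G \<eta> \<Longrightarrow> x \<notin> A.Ob \<Longrightarrow> \<eta> x = undefined"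
  by (drule NT_D) (elim conjE, drule spec, erule mp)

lemma NT_intro:
  assumes "isF F" "isF G" "\<And>x. x \<in> A.Ob \<Longrightarrow> \<eta> x \<in> D.Ar \<and> D.dm (\<eta> x) = fst F x \<and> D.cd (\<eta> x) = fst G x"
    "\<And>u. u \<in> A.Ar \<Longrightarrow> D.cp (\<eta> (A.cd u)) (snd F u) = D.cp (snd G u) (\<eta> (A.dm u))"
    "\<And>x. x \<notin> A.Ob \<Longrightarrow> \<eta> x = undefined"
  shows "NT F G \<eta>"
proof -
  have a: "\<forall>x\<in>A.Ob. \<eta> x \<in> D.Ar \<and> D.dm (\<eta> x) = fst F x \<and> D.cd (\<eta> x) = fst G x"
    by (intro ballI) (rule assms(3))
  have b: "\<forall>u\<in>A.Ar. D.cp (\<eta> (A.cd u)) (snd F u) = D.cp (snd G u) (\<eta> (A.dm u))"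
    by (intro ballI) (rule assms(4))
  have c: "\<forall>x. x \<notin> A.Ob \<longrightarrow> \<eta> x = undefined"
    by (intro allI impI) (rule assms(5))
  show ?thesis unfolding NT_iff nat_trans_maps_def using assms(1,2) a b c by (intro conjI)
qed

lemma NT_eqI:
  assumes "NT F G \<eta>" "NT F G \<theta>" "\<And>x. x \<in> A.Ob \<Longrightarrow> \<eta> x = \<theta> x"
  shows "\<eta> = \<theta>"
proof
  fix x show "\<eta> x = \<theta> x"
    using assms NT_ext[OF assms(1)] NT_ext[OF assms(2)] by (cases "x \<in> A.Ob") simp_all
qed

lemma FC_arr_cases:
  assumes "\<tau> \<in> carr FC"
  obtains F G \<eta> where "\<tau> = (F, G, \<eta>)" "NT F G \<eta>"
  using assms by (cases \<tau>) auto

lemma NT_id: assumes "isF F" shows "NT F F (\<lambda>x. if x \<in> A.Ob then D.idc (fst F x) else undefined)"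
proof (rule NT_intro)
  fix u assume u: "u \<in> A.Ar"
  show "D.cp (if A.cd u \<in> A.Ob then D.idc (fst F (A.cd u)) else undefined) (snd F u) =
        D.cp (snd F u) (if A.dm u \<in> A.Ob then D.idc (fst F (A.dm u)) else undefined)"
    using u assms by simp
qed (use assms in simp_all)

lemma NT_comp:
  assumes "NT F G \<eta>" "NT G H \<theta>"
  shows "NT F H (\<lambda>x. if x \<in> A.Ob then D.cp (\<theta> x) (\<eta> x) else undefined)"
proof (rule NT_intro)
  have F: "isF F" and G: "isF G" and H: "isF H" using assms NT_F NT_G by blast+
  then show "isF F" "isF H" by simp_all
  fix x assume "x \<in> A.Ob"
  then show "(if x \<in> A.Ob then D.cp (\<theta> x) (\<eta> x) else undefined) \<in> D.Ar \<and>
      D.dm (if x \<in> A.Ob then D.cp (\<theta> x) (\<eta> x) else undefined) = fst F x \<and>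
      D.cd (if x \<in> A.Ob then D.cp (\<theta> x) (\<eta> x) else undefined) = fst H x"
    using assms by simp
next
  fix u assume u: "u \<in> A.Ar"
  have F: "isF F" and G: "isF G" and H: "isF H" using assms NT_F NT_G by blast+
  have x: "A.dm u \<in> A.Ob" and y: "A.cd u \<in> A.Ob" using u by simp_all
  have "D.cp (D.cp (\<theta> (A.cd u)) (\<eta> (A.cd u))) (snd F u) = D.cp (\<theta> (A.cd u)) (D.cp (\<eta> (A.cd u)) (snd F u))"
    using assms u x y F by (intro D.assoc[symmetric]) simp_all
  also have "\<dots> = D.cp (\<theta> (A.cd u)) (D.cp (snd G u) (\<eta> (A.dm u)))"
    using NT_nat[OF assms(1) u] by simp
  also have "\<dots> = D.cp (D.cp (\<theta> (A.cd u)) (snd G u)) (\<eta> (A.dm u))"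
    using assms u x y G by (intro D.assoc) simp_all
  also have "\<dots> = D.cp (D.cp (snd H u) (\<theta> (A.dm u))) (\<eta> (A.dm u))"
    using NT_nat[OF assms(2) u] by simp
  also have "\<dots> = D.cp (snd H u) (D.cp (\<theta> (A.dm u)) (\<eta> (A.dm u)))"
    using assms u x y H by (intro D.assoc[symmetric]) simp_all
  finally show "D.cp (if A.cd u \<in> A.Ob then D.cp (\<theta> (A.cd u)) (\<eta> (A.cd u)) else undefined) (snd F u) =
         D.cp (snd H u) (if A.dm u \<in> A.Ob then D.cp (\<theta> (A.dm u)) (\<eta> (A.dm u)) else undefined)"
    using x y by simp
qed simp

lemma FC_is_category: "is_category FC"
  unfolding is_category_def
proof (intro conjI ballI impI)
  fix f assume "f \<in> carr FC"
  then obtain F G \<eta> where f: "f = (F,G,\<eta>)" "NT F G \<eta>" by (rule FC_arr_cases)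
  show "cdom FC f \<in> cobj FC" using f NT_F by simp
  show "ccod FC f \<in> cobj FC" using f NT_G by simp
  have "(\<lambda>x. if x \<in> A.Ob then D.cp (if x \<in> A.Ob then D.idc (fst G x) else undefined) (\<eta> x) else undefined) = \<eta>"
  proof (rule ext)
    fix x show "(if x \<in> A.Ob then D.cp (if x \<in> A.Ob then D.idc (fst G x) else undefined) (\<eta> x) else undefined) = \<eta> x"
      using NT_ext[OF f(2), of x] f(2) by (cases "x \<in> A.Ob") simp_all
  qed
  then show "ccomp FC (cid FC (ccod FC f)) f = f" using f by (simp add: FC_id)
  have "(\<lambda>x. if x \<in> A.Ob then D.cp (\<eta> x) (if x \<in> A.Ob then D.idc (fst F x) else undefined) else undefined) = \<eta>"
  proof (rule ext)
    fix x show "(if x \<in> A.Ob then D.cp (\<eta> x) (if x \<in> A.Ob then D.idc (fst F x) else undefined) else undefined) = \<eta> x"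
      using NT_ext[OF f(2), of x] f(2) by (cases "x \<in> A.Ob") simp_all
  qed
  then show "ccomp FC f (cid FC (cdom FC f)) = f" using f by (simp add: FC_id)
next
  fix F assume "F \<in> cobj FC"
  then have F: "isF F" by simp
  show "cid FC F \<in> carr FC" "cdom FC (cid FC F) = F" "ccod FC (cid FC F) = F"
    using NT_id[OF F] by (simp_all add: FC_id)
next
  fix f g assume "f \<in> carr FC" "g \<in> carr FC" and c: "ccod FC f = cdom FC g"
  then obtain F G \<eta> G' H \<theta> where f: "f = (F,G,\<eta>)" "NT F G \<eta>" and g: "g = (G',H,\<theta>)" "NT G' H \<theta>"
    by (metis FC_arr_cases)
  have "G' = G" using c f g by simp
  then show "ccomp FC g f \<in> carr FC" "cdom FC (ccomp FC g f) = cdom FC f" "ccod FC (ccomp FC g f) = ccod FC g"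
    using NT_comp[OF f(2)] f g by simp_all
next
  fix f g h assume "f \<in> carr FC" "g \<in> carr FC" "h \<in> carr FC" and c: "ccod FC f = cdom FC g \<and> ccod FC g = cdom FC h"
  then obtain F G \<eta> G' H \<theta> H' K \<kappa> where f: "f = (F,G,\<eta>)" "NT F G \<eta>" and g: "g = (G',H,\<theta>)" "NT G' H \<theta>"
    and h: "h = (H',K,\<kappa>)" "NT H' K \<kappa>"
    by (metis FC_arr_cases)
  have "G' = G" "H' = H" using c f g h by simp_all
  moreover have "(\<lambda>x. if x \<in> A.Ob then D.cp (\<kappa> x) (if x \<in> A.Ob then D.cp (\<theta> x) (\<eta> x) else undefined) else undefined)
     = (\<lambda>x. if x \<in> A.Ob then D.cp (if x \<in> A.Ob then D.cp (\<kappa> x) (\<theta> x) else undefined) (\<eta> x) else undefined)"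
  proof (rule ext)
    fix x show "(if x \<in> A.Ob then D.cp (\<kappa> x) (if x \<in> A.Ob then D.cp (\<theta> x) (\<eta> x) else undefined) else undefined)
     = (if x \<in> A.Ob then D.cp (if x \<in> A.Ob then D.cp (\<kappa> x) (\<theta> x) else undefined) (\<eta> x) else undefined)"
    proof (cases "x \<in> A.Ob")
      case True
      then show ?thesis using f(2) g(2) h(2) \<open>G' = G\<close> \<open>H' = H\<close> by (simp add: D.assoc)
    qed simp
  qed
  ultimately show "ccomp FC h (ccomp FC g f) = ccomp FC (ccomp FC h g) f"
    using f g h by simp
qed

sublocale FC: cat FC by unfold_locales (rule FC_is_category)

lemma FC_iso_comp:
  assumes "is_iso FC (F, G, \<eta>)" "x \<in> A.Ob" shows "is_iso D (\<eta> x)"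
proof -
  from assms(1) obtain g where g: "g \<in> carr FC" "cdom FC g = G" "ccod FC g = F"
    "ccomp FC g (F, G, \<eta>) = cid FC F" "ccomp FC (F, G, \<eta>) g = cid FC G"
    unfolding is_iso_def by auto
  then obtain \<theta> where g': "g = (G, F, \<theta>)" "NT G F \<theta>" by (metis FC_arr_cases FC_dm FC_cd)
  have f: "NT F G \<eta>" using assms(1) unfolding is_iso_def by blast
  have "(\<lambda>x. if x \<in> A.Ob then D.cp (\<theta> x) (\<eta> x) else undefined) = (\<lambda>x. if x \<in> A.Ob then D.idc (fst F x) else undefined)"
    using g(4) g' by (simp add: FC_id)
  then have 1: "D.cp (\<theta> x) (\<eta> x) = D.idc (fst F x)" using assms(2) by meson
  have "(\<lambda>x. if x \<in> A.Ob then D.cp (\<eta> x) (\<theta> x) else undefined) = (\<lambda>x. if x \<in> A.Ob then D.idc (fst G x) else undefined)"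
    using g(5) g' by (simp add: FC_id)
  then have 2: "D.cp (\<eta> x) (\<theta> x) = D.idc (fst G x)" using assms(2) by meson
  show ?thesis using 1 2 f g' assms(2) by (intro D.iso_intro[where g="\<theta> x"]) simp_all
qed

lemma FC_iso_intro:
  assumes "NT F G \<eta>" "\<And>x. x \<in> A.Ob \<Longrightarrow> is_iso D (\<eta> x)"
  shows "is_iso FC (F, G, \<eta>)"
proof -
  define \<theta> where "\<theta> x = (if x \<in> A.Ob then D.iv (\<eta> x) else undefined)" for x
  have F: "isF F" and G: "isF G" using assms NT_F NT_G by blast+
  have th: "\<theta> x \<in> D.Ar \<and> D.dm (\<theta> x) = fst G x \<and> D.cd (\<theta> x) = fst F x \<and>
      D.cp (\<theta> x) (\<eta> x) = D.idc (fst F x) \<and> D.cp (\<eta> x) (\<theta> x) = D.idc (fst G x)" if "x \<in> A.Ob" for x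
    using D.iv[OF assms(2)[OF that]] that assms(1) unfolding \<theta>_def by simp
  have nt: "NT G F \<theta>"
  proof (rule NT_intro)
    fix u assume u: "u \<in> A.Ar"
    let ?x = "A.dm u" and ?y = "A.cd u"
    have x: "?x \<in> A.Ob" and y: "?y \<in> A.Ob" using u by simp_all
    note tx = th[OF x] and ty = th[OF y]
    have "D.cp (\<theta> ?y) (snd G u) = D.cp (D.cp (\<theta> ?y) (snd G u)) (D.cp (\<eta> ?x) (\<theta> ?x))"
      using tx ty u G by simp
    also have "\<dots> = D.cp (D.cp (D.cp (\<theta> ?y) (snd G u)) (\<eta> ?x)) (\<theta> ?x)"
      using tx ty u G assms(1) x by (intro D.assoc) simp_all
    also have "D.cp (D.cp (\<theta> ?y) (snd G u)) (\<eta> ?x) = D.cp (\<theta> ?y) (D.cp (snd G u) (\<eta> ?x))"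
      using tx ty u G assms(1) x by (intro D.assoc[symmetric]) simp_all
    also have "\<dots> = D.cp (\<theta> ?y) (D.cp (\<eta> ?y) (snd F u))"
      using NT_nat[OF assms(1) u] by simp
    also have "\<dots> = D.cp (D.cp (\<theta> ?y) (\<eta> ?y)) (snd F u)"
      using tx ty u F assms(1) y by (intro D.assoc) simp_all
    also have "\<dots> = snd F u" using ty u F by simp
    finally show "D.cp (\<theta> ?y) (snd G u) = D.cp (snd F u) (\<theta> ?x)" .
  qed (use F G th in \<open>simp_all add: \<theta>_def\<close>)
  show ?thesis unfolding is_iso_def
  proof (intro conjI bexI[of _ "(G, F, \<theta>)"])
    show "(F, G, \<eta>) \<in> carr FC" "(G, F, \<theta>) \<in> carr FC" by (fact assms(1), fact nt)
    show "ccomp FC (G, F, \<theta>) (F, G, \<eta>) = cid FC (cdom FC (F, G, \<eta>))"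
      using th by (auto simp: FC_id intro!: ext)
    show "ccomp FC (F, G, \<eta>) (G, F, \<theta>) = cid FC (ccod FC (F, G, \<eta>))"
      using th by (auto simp: FC_id intro!: ext)
  qed simp_all
qed

definition bang where "bang x = (THE f. f \<in> A.Ar \<and> A.dm f = x \<and> A.cd f = t)"

lemma t_obj[simp]: "t \<in> A.Ob" using trm unfolding is_terminal_def by blast

lemma bang: assumes "x \<in> A.Ob" shows "bang x \<in> A.Ar" "A.dm (bang x) = x" "A.cd (bang x) = t"
proof -
  have "\<exists>!f. f \<in> A.Ar \<and> A.dm f = x \<and> A.cd f = t" using trm assms unfolding is_terminal_def by blast
  then have "bang x \<in> A.Ar \<and> A.dm (bang x) = x \<and> A.cd (bang x) = t" unfolding bang_def by (rule theI')
  then show "bang x \<in> A.Ar" "A.dm (bang x) = x" "A.cd (bang x) = t" by simp_all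
qed

lemma bang_unique: assumes "f \<in> A.Ar" "A.cd f = t" shows "f = bang (A.dm f)"
proof -
  have x: "A.dm f \<in> A.Ob" using assms by simp
  have "\<exists>!f'. f' \<in> A.Ar \<and> A.dm f' = A.dm f \<and> A.cd f' = t" using trm x unfolding is_terminal_def by blast
  then have "bang (A.dm f) = f" unfolding bang_def by (rule the1_equality) (use assms in simp)
  then show ?thesis by simp
qed

lemma bang_t: "bang t = A.idc t"
  using bang_unique[of "A.idc t"] by simp

lemma bang_comp: assumes "u \<in> A.Ar" shows "A.cp (bang (A.cd u)) u = bang (A.dm u)"
proof -
  have y: "A.cd u \<in> A.Ob" using assms by simp
  note b = bang[OF y]
  have "A.cp (bang (A.cd u)) u = bang (A.dm (A.cp (bang (A.cd u)) u))"
    using b assms by (intro bang_unique) simp_all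
  then show ?thesis using b assms by simp
qed

end


locale ctx2 = ctx +
  assumes pbs: "has_pullbacks D"
begin

definition pbpq where
  "pbpq G m x = (if x = t then (D.idc (D.dm m), m)
      else (SOME pq. is_pullback D m (snd G (bang x)) (fst pq) (snd pq)))"
definition "pp G m x = fst (pbpq G m x)"
definition "pq G m x = snd (pbpq G m x)"
definition "P0 G m x = (if x \<in> A.Ob then D.dm (pp G m x) else undefined)"
definition "P1 G m u = (if u \<in> A.Ar then
   D.pbind m (snd G (bang (A.cd u))) (pp G m (A.cd u)) (pq G m (A.cd u)) (pp G m (A.dm u))
     (D.cp (snd G u) (pq G m (A.dm u))) else undefined)"
definition "PBF G m = (P0 G m, P1 G m)"
definition "qt G m x = (if x \<in> A.Ob then pq G m x else undefined)"

lemma pp_t: "pp G m t = D.idc (D.dm m)" by (simp add: pp_def pbpq_def)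
lemma pq_t: "pq G m t = m" by (simp add: pq_def pbpq_def)

context
  fixes G m
  assumes G: "isF G" and m: "m \<in> D.Ar" "D.cd m = fst G t"
begin

lemma bangG: "x \<in> A.Ob \<Longrightarrow> snd G (bang x) \<in> D.Ar \<and> D.dm (snd G (bang x)) = fst G x \<and> D.cd (snd G (bang x)) = fst G t"
  using bang[of x] G by simp

lemma pb_at: assumes x: "x \<in> A.Ob" shows "is_pullback D m (snd G (bang x)) (pp G m x) (pq G m x)"
proof (cases "x = t")
  case True
  have "snd G (bang x) = D.idc (D.cd m)" using True G m by (simp add: bang_t)
  then show ?thesis using True D.pb_id[OF m(1)] by (simp add: pp_t pq_t)
next
  case False
  have "\<exists>p q. is_pullback D m (snd G (bang x)) p q"
    using pbs bangG[OF x] m unfolding has_pullbacks_def by simp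
  then have "\<exists>pq. is_pullback D m (snd G (bang x)) (fst pq) (snd pq)" by simp
  then have "is_pullback D m (snd G (bang x)) (fst (SOME pq. is_pullback D m (snd G (bang x)) (fst pq) (snd pq)))
     (snd (SOME pq. is_pullback D m (snd G (bang x)) (fst pq) (snd pq)))"
    by (rule someI_ex)
  then show ?thesis using False by (simp add: pp_def pq_def pbpq_def)
qed

lemma pp_hom: assumes "x \<in> A.Ob" shows "pp G m x \<in> D.Ar" "D.dm (pp G m x) = P0 G m x" "D.cd (pp G m x) = D.dm m"
  using D.pb_facts[OF pb_at[OF assms]] assms by (simp_all add: P0_def)

lemma pq_hom: assumes "x \<in> A.Ob" shows "pq G m x \<in> D.Ar" "D.dm (pq G m x) = P0 G m x" "D.cd (pq G m x) = fst G x"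
  using D.pb_facts[OF pb_at[OF assms]] bangG[OF assms] assms by (simp_all add: P0_def)

lemma pq_sq: assumes "x \<in> A.Ob" shows "D.cp m (pp G m x) = D.cp (snd G (bang x)) (pq G m x)"
  using D.pb_facts[OF pb_at[OF assms]] by simp

lemma P0_obj: "x \<in> A.Ob \<Longrightarrow> P0 G m x \<in> D.Ob"
  using pp_hom[of x] D.dm_obj by metis

lemma Gbang_comp: assumes u: "u \<in> A.Ar"
  shows "D.cp (snd G (bang (A.cd u))) (snd G u) = snd G (bang (A.dm u))"
proof -
  have y: "A.cd u \<in> A.Ob" using u by simp
  have "D.cp (snd G (bang (A.cd u))) (snd G u) = snd G (A.cp (bang (A.cd u)) u)"
    using F_comp[OF G u bang(1)[OF y]] bang[OF y] by simp
  then show ?thesis using bang_comp[OF u] by simp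
qed

lemma P1_cond: assumes u: "u \<in> A.Ar"
  shows "D.cp m (pp G m (A.dm u)) = D.cp (snd G (bang (A.cd u))) (D.cp (snd G u) (pq G m (A.dm u)))"
proof -
  have x: "A.dm u \<in> A.Ob" and y: "A.cd u \<in> A.Ob" using u by simp_all
  have "D.cp (snd G (bang (A.cd u))) (D.cp (snd G u) (pq G m (A.dm u))) =
      D.cp (D.cp (snd G (bang (A.cd u))) (snd G u)) (pq G m (A.dm u))"
    using bangG[OF y] pq_hom[OF x] G u by (intro D.assoc) simp_all
  also have "\<dots> = D.cp (snd G (bang (A.dm u))) (pq G m (A.dm u))" using Gbang_comp[OF u] by simp
  also have "\<dots> = D.cp m (pp G m (A.dm u))" using pq_sq[OF x] by simp
  finally show ?thesis by simp
qed

lemma P1: assumes u: "u \<in> A.Ar"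
  shows "P1 G m u \<in> D.Ar" "D.dm (P1 G m u) = P0 G m (A.dm u)" "D.cd (P1 G m u) = P0 G m (A.cd u)"
    "D.cp (pp G m (A.cd u)) (P1 G m u) = pp G m (A.dm u)"
    "D.cp (pq G m (A.cd u)) (P1 G m u) = D.cp (snd G u) (pq G m (A.dm u))"
proof -
  have x: "A.dm u \<in> A.Ob" and y: "A.cd u \<in> A.Ob" using u by simp_all
  note B = D.pbind[OF pb_at[OF y], of "pp G m (A.dm u)" "D.cp (snd G u) (pq G m (A.dm u))"]
  have c: "pp G m (A.dm u) \<in> D.Ar" "D.cp (snd G u) (pq G m (A.dm u)) \<in> D.Ar"
    "D.dm (pp G m (A.dm u)) = D.dm (D.cp (snd G u) (pq G m (A.dm u)))"
    "D.cd (pp G m (A.dm u)) = D.dm m"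
    "D.cd (D.cp (snd G u) (pq G m (A.dm u))) = D.dm (snd G (bang (A.cd u)))"
    using pp_hom[OF x] pq_hom[OF x] bangG[OF y] G u by simp_all
  note B' = B[OF c P1_cond[OF u]]
  show "P1 G m u \<in> D.Ar" "D.dm (P1 G m u) = P0 G m (A.dm u)" "D.cd (P1 G m u) = P0 G m (A.cd u)"
    "D.cp (pp G m (A.cd u)) (P1 G m u) = pp G m (A.dm u)"
    "D.cp (pq G m (A.cd u)) (P1 G m u) = D.cp (snd G u) (pq G m (A.dm u))"
    using B' u pp_hom[OF x] pp_hom[OF y] by (simp_all add: P1_def)
qed

lemma P_unique: assumes x: "x \<in> A.Ob" and "a \<in> D.Ar" "b \<in> D.Ar" "D.dm a = D.dm b" "D.cd a = P0 G m x" "D.cd b = P0 G m x"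
  "D.cp (pp G m x) a = D.cp (pp G m x) b" "D.cp (pq G m x) a = D.cp (pq G m x) b"
  shows "a = b"
  by (rule D.pb_unique[OF pb_at[OF x]]) (use assms pp_hom[OF x] in simp_all)

lemma PBF_functor: "isF (PBF G m)"
  unfolding is_functor_def functor_maps_def
proof (intro conjI ballI allI impI)
  fix x assume x: "x \<in> A.Ob"
  show "fst (PBF G m) x \<in> D.Ob" using P0_obj[OF x] by (simp add: PBF_def)
  show "snd (PBF G m) (A.idc x) = D.idc (fst (PBF G m) x)"
  proof -
    have i: "A.idc x \<in> A.Ar" "A.dm (A.idc x) = x" "A.cd (A.idc x) = x" using x by simp_all
    note Q = P1[OF i(1), unfolded i(2,3)]
    have "P1 G m (A.idc x) = D.idc (P0 G m x)"
      by (rule P_unique[OF x]) (use Q x pp_hom[OF x] pq_hom[OF x] P0_obj[OF x] G in simp_all)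
    then show ?thesis by (simp add: PBF_def)
  qed
next
  fix u assume u: "u \<in> A.Ar"
  show "snd (PBF G m) u \<in> D.Ar" "D.dm (snd (PBF G m) u) = fst (PBF G m) (A.dm u)"
        "D.cd (snd (PBF G m) u) = fst (PBF G m) (A.cd u)"
    using P1[OF u] by (simp_all add: PBF_def)
next
  fix u v assume u: "u \<in> A.Ar" and v: "v \<in> A.Ar" and c: "A.cd u = A.dm v"
  have vu: "A.cp v u \<in> A.Ar" "A.dm (A.cp v u) = A.dm u" "A.cd (A.cp v u) = A.cd v" using u v c by simp_all
  have x: "A.dm u \<in> A.Ob" and y: "A.cd u \<in> A.Ob" and z: "A.cd v \<in> A.Ob" using u v by simp_all
  note Pu = P1[OF u] and Pv = P1[OF v] and Pvu = P1[OF vu(1), unfolded vu(2,3)]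
  have "P1 G m (A.cp v u) = D.cp (P1 G m v) (P1 G m u)"
  proof (rule P_unique[OF z])
    show "D.cp (pp G m (A.cd v)) (P1 G m (A.cp v u)) = D.cp (pp G m (A.cd v)) (D.cp (P1 G m v) (P1 G m u))"
    proof -
      have "D.cp (pp G m (A.cd v)) (D.cp (P1 G m v) (P1 G m u)) = D.cp (D.cp (pp G m (A.cd v)) (P1 G m v)) (P1 G m u)"
        using Pu Pv c pp_hom[OF z] by (intro D.assoc) simp_all
      also have "\<dots> = pp G m (A.dm u)" using Pu Pv c by simp
      finally show ?thesis using Pvu by simp
    qed
    show "D.cp (pq G m (A.cd v)) (P1 G m (A.cp v u)) = D.cp (pq G m (A.cd v)) (D.cp (P1 G m v) (P1 G m u))"
    proof -
      have "D.cp (pq G m (A.cd v)) (D.cp (P1 G m v) (P1 G m u)) = D.cp (D.cp (pq G m (A.cd v)) (P1 G m v)) (P1 G m u)"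
        using Pu Pv c pq_hom[OF z] by (intro D.assoc) simp_all
      also have "\<dots> = D.cp (D.cp (snd G v) (pq G m (A.dm v))) (P1 G m u)" using Pv by simp
      also have "\<dots> = D.cp (snd G v) (D.cp (pq G m (A.dm v)) (P1 G m u))"
        using Pu Pv c pq_hom[OF y] G v by (intro D.assoc[symmetric]) simp_all
      also have "\<dots> = D.cp (snd G v) (D.cp (snd G u) (pq G m (A.dm u)))" using Pu c by simp
      also have "\<dots> = D.cp (D.cp (snd G v) (snd G u)) (pq G m (A.dm u))"
        using c pq_hom[OF x] G u v by (intro D.assoc) simp_all
      also have "\<dots> = D.cp (snd G (A.cp v u)) (pq G m (A.dm u))" using F_comp[OF G u v c] by simp
      finally show ?thesis using Pvu by simp
    qed
  qed (use Pu Pv Pvu c in simp_all)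
  then show "snd (PBF G m) (A.cp v u) = D.cp (snd (PBF G m) v) (snd (PBF G m) u)"
    by (simp add: PBF_def)
next
  fix x assume "x \<notin> A.Ob" then show "fst (PBF G m) x = undefined" by (simp add: PBF_def P0_def)
next
  fix u assume "u \<notin> A.Ar" then show "snd (PBF G m) u = undefined" by (simp add: PBF_def P1_def)
qed

lemma PBF_simps: "fst (PBF G m) = P0 G m" "snd (PBF G m) = P1 G m" by (simp_all add: PBF_def)

lemma qt_NT: "NT (PBF G m) G (qt G m)"
proof (rule NT_intro)
  show "isF (PBF G m)" by (rule PBF_functor)
  show "isF G" by (rule G)
  fix x assume x: "x \<in> A.Ob"
  show "qt G m x \<in> D.Ar \<and> D.dm (qt G m x) = fst (PBF G m) x \<and> D.cd (qt G m x) = fst G x"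
    using pq_hom[OF x] x by (simp add: qt_def PBF_simps)
next
  fix u assume u: "u \<in> A.Ar"
  show "D.cp (qt G m (A.cd u)) (snd (PBF G m) u) = D.cp (snd G u) (qt G m (A.dm u))"
    using P1[OF u] u by (simp add: qt_def PBF_simps)
qed (simp add: qt_def)

lemma qt_cart: "cartesian_nat_trans A D (PBF G m, G, qt G m)"
  unfolding cartesian_nat_trans_def
proof (simp only: prod.case, intro ballI)
  fix u assume u: "u \<in> A.Ar"
  have x: "A.dm u \<in> A.Ob" and y: "A.cd u \<in> A.Ob" using u by simp_all
  have P2: "is_pullback D m (D.cp (snd G (bang (A.cd u))) (snd G u)) (pp G m (A.dm u)) (pq G m (A.dm u))"
    using pb_at[OF x] Gbang_comp[OF u] by simp
  have "is_pullback D (pq G m (A.cd u)) (snd G u) (P1 G m u) (pq G m (A.dm u))"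
    by (rule D.pb_cancel[OF pb_at[OF y] P2]) (use P1[OF u] G u pp_hom[OF y] bangG[OF y] in simp_all)
  then show "is_pullback D (qt G m (A.cd u)) (snd G u) (snd (PBF G m) u) (qt G m (A.dm u))"
    using x y by (simp add: qt_def PBF_simps)
qed

lemma qt_t: "qt G m t = m" by (simp add: qt_def pq_t)
lemma P0_t: "P0 G m t = D.dm m" using m by (simp add: P0_def pp_t)

lemma P1_bang: assumes x: "x \<in> A.Ob" shows "P1 G m (bang x) = pp G m x"
proof -
  note b = bang[OF x]
  have "D.cp (pp G m t) (P1 G m (bang x)) = pp G m x" using P1(4)[OF b(1)] b by simp
  moreover have "D.cp (pp G m t) (P1 G m (bang x)) = P1 G m (bang x)"
    using P1[OF b(1)] b m by (simp add: pp_t P0_t)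
  ultimately show ?thesis by simp
qed

definition "ind F h e x = (if x \<in> A.Ob then
   D.pbind m (snd G (bang x)) (pp G m x) (pq G m x) (D.cp e (snd F (bang x))) (h x) else undefined)"

context
  fixes F h e
  assumes h: "NT F G h" and e: "e \<in> D.Ar" "D.dm e = fst F t" "D.cd e = D.dm m" "D.cp m e = h t"
begin

lemma F: "isF F" using h NT_F by blast

lemma ind_cond: assumes x: "x \<in> A.Ob"
  shows "D.cp m (D.cp e (snd F (bang x))) = D.cp (snd G (bang x)) (h x)"
proof -
  note b = bang[OF x]
  have "D.cp m (D.cp e (snd F (bang x))) = D.cp (D.cp m e) (snd F (bang x))"
    using e m F b by (intro D.assoc) simp_all
  also have "\<dots> = D.cp (h t) (snd F (bang x))" using e by simp
  also have "\<dots> = D.cp (snd G (bang x)) (h x)" using NT_nat[OF h b(1)] b by simp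
  finally show ?thesis .
qed

lemma ind: assumes x: "x \<in> A.Ob"
  shows "ind F h e x \<in> D.Ar" "D.dm (ind F h e x) = fst F x" "D.cd (ind F h e x) = P0 G m x"
   "D.cp (pp G m x) (ind F h e x) = D.cp e (snd F (bang x))" "D.cp (pq G m x) (ind F h e x) = h x"
proof -
  note b = bang[OF x]
  have c: "D.cp e (snd F (bang x)) \<in> D.Ar" "h x \<in> D.Ar" "D.dm (D.cp e (snd F (bang x))) = D.dm (h x)"
    "D.cd (D.cp e (snd F (bang x))) = D.dm m" "D.cd (h x) = D.dm (snd G (bang x))"
    using e F b h x bangG[OF x] by simp_all
  note B = D.pbind[OF pb_at[OF x] c ind_cond[OF x]]
  show "ind F h e x \<in> D.Ar" "D.dm (ind F h e x) = fst F x" "D.cd (ind F h e x) = P0 G m x"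
   "D.cp (pp G m x) (ind F h e x) = D.cp e (snd F (bang x))" "D.cp (pq G m x) (ind F h e x) = h x"
    using B x pp_hom[OF x] h bang[OF x] F e by (simp_all add: ind_def)
qed

lemma ind_unique: assumes x: "x \<in> A.Ob" and v: "v \<in> D.Ar" "D.dm v = fst F x" "D.cd v = P0 G m x"
   "D.cp (pp G m x) v = D.cp e (snd F (bang x))" "D.cp (pq G m x) v = h x"
  shows "v = ind F h e x"
  by (rule P_unique[OF x]) (use v ind[OF x] in simp_all)

lemma ind_t: "ind F h e t = e"
proof -
  have "e = ind F h e t"
  proof (rule ind_unique)
    show "D.cp (pp G m t) e = D.cp e (snd F (bang t))" using e F by (simp add: bang_t pp_t)
    show "D.cp (pq G m t) e = h t" using e by (simp add: pq_t)
  qed (use e P0_t in simp_all)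
  then show ?thesis by simp
qed

lemma ind_NT: "NT F (PBF G m) (ind F h e)"
proof (rule NT_intro)
  show "isF F" by (rule F)
  show "isF (PBF G m)" by (rule PBF_functor)
  fix x assume x: "x \<in> A.Ob"
  show "ind F h e x \<in> D.Ar \<and> D.dm (ind F h e x) = fst F x \<and> D.cd (ind F h e x) = fst (PBF G m) x"
    using ind[OF x] by (simp add: PBF_simps)
next
  fix u assume u: "u \<in> A.Ar"
  have x: "A.dm u \<in> A.Ob" and y: "A.cd u \<in> A.Ob" using u by simp_all
  note ix = ind[OF x] and iy = ind[OF y] and Pu = P1[OF u]
  note by' = bang[OF y]
  have "D.cp (ind F h e (A.cd u)) (snd F u) = D.cp (P1 G m u) (ind F h e (A.dm u))"
  proof (rule P_unique[OF y])
    show "D.cp (pp G m (A.cd u)) (D.cp (ind F h e (A.cd u)) (snd F u)) = D.cp (pp G m (A.cd u)) (D.cp (P1 G m u) (ind F h e (A.dm u)))"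
    proof -
      have "D.cp (pp G m (A.cd u)) (D.cp (ind F h e (A.cd u)) (snd F u)) = D.cp (D.cp (pp G m (A.cd u)) (ind F h e (A.cd u))) (snd F u)"
        using iy u F pp_hom[OF y] by (intro D.assoc) simp_all
      also have "\<dots> = D.cp (D.cp e (snd F (bang (A.cd u)))) (snd F u)" using iy by simp
      also have "\<dots> = D.cp e (D.cp (snd F (bang (A.cd u))) (snd F u))"
        using e u F by' by (intro D.assoc[symmetric]) simp_all
      also have "D.cp (snd F (bang (A.cd u))) (snd F u) = snd F (bang (A.dm u))"
        using F_comp[OF F u by'(1)] by' bang_comp[OF u] by simp
      also have "D.cp e (snd F (bang (A.dm u))) = D.cp (pp G m (A.dm u)) (ind F h e (A.dm u))" using ix by simp
      also have "\<dots> = D.cp (D.cp (pp G m (A.cd u)) (P1 G m u)) (ind F h e (A.dm u))" using Pu by simp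
      also have "\<dots> = D.cp (pp G m (A.cd u)) (D.cp (P1 G m u) (ind F h e (A.dm u)))"
        using ix Pu pp_hom[OF y] by (intro D.assoc[symmetric]) simp_all
      finally show ?thesis .
    qed
    show "D.cp (pq G m (A.cd u)) (D.cp (ind F h e (A.cd u)) (snd F u)) = D.cp (pq G m (A.cd u)) (D.cp (P1 G m u) (ind F h e (A.dm u)))"
    proof -
      have "D.cp (pq G m (A.cd u)) (D.cp (ind F h e (A.cd u)) (snd F u)) = D.cp (D.cp (pq G m (A.cd u)) (ind F h e (A.cd u))) (snd F u)"
        using iy u F pq_hom[OF y] by (intro D.assoc) simp_all
      also have "\<dots> = D.cp (h (A.cd u)) (snd F u)" using iy by simp
      also have "\<dots> = D.cp (snd G u) (h (A.dm u))" using NT_nat[OF h u] .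
      also have "\<dots> = D.cp (snd G u) (D.cp (pq G m (A.dm u)) (ind F h e (A.dm u)))" using ix by simp
      also have "\<dots> = D.cp (D.cp (snd G u) (pq G m (A.dm u))) (ind F h e (A.dm u))"
        using ix G u pq_hom[OF x] by (intro D.assoc) simp_all
      also have "\<dots> = D.cp (D.cp (pq G m (A.cd u)) (P1 G m u)) (ind F h e (A.dm u))" using Pu by simp
      also have "\<dots> = D.cp (pq G m (A.cd u)) (D.cp (P1 G m u) (ind F h e (A.dm u)))"
        using ix Pu pq_hom[OF y] by (intro D.assoc[symmetric]) simp_all
      finally show ?thesis .
    qed
  qed (use ix iy Pu u F in simp_all)
  then show "D.cp (ind F h e (A.cd u)) (snd F u) = D.cp (snd (PBF G m) u) (ind F h e (A.dm u))"
    by (simp add: PBF_simps)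
qed (simp add: ind_def)

lemma ind_comp: "ccomp FC (PBF G m, G, qt G m) (F, PBF G m, ind F h e) = (F, G, h)"
proof -
  have "(\<lambda>x. if x \<in> A.Ob then D.cp (qt G m x) (ind F h e x) else undefined) = h"
  proof (rule ext)
    fix x show "(if x \<in> A.Ob then D.cp (qt G m x) (ind F h e x) else undefined) = h x"
      using ind(5)[of x] NT_ext[OF h, of x] by (cases "x \<in> A.Ob") (simp_all add: qt_def)
  qed
  then show ?thesis by simp
qed

end

end

end


locale ctx3 = ctx2 +
  fixes E M :: "'b set"
  assumes ofs: "is_ofs D E M"
begin

lemma E_sub: "E \<subseteq> D.Ar" using ofs unfolding is_ofs_def by blast
lemma M_sub: "M \<subseteq> D.Ar" using ofs unfolding is_ofs_def by blast
lemma iso_E: "is_iso D f \<Longrightarrow> f \<in> E" using ofs unfolding is_ofs_def by blast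
lemma iso_M: "is_iso D f \<Longrightarrow> f \<in> M" using ofs unfolding is_ofs_def by blast
lemma E_comp: "f \<in> E \<Longrightarrow> g \<in> E \<Longrightarrow> D.cd f = D.dm g \<Longrightarrow> D.cp g f \<in> E"
  using ofs unfolding is_ofs_def by blast
lemma M_comp: "f \<in> M \<Longrightarrow> g \<in> M \<Longrightarrow> D.cd f = D.dm g \<Longrightarrow> D.cp g f \<in> M"
  using ofs unfolding is_ofs_def by blast
lemma orth: "e \<in> E \<Longrightarrow> m \<in> M \<Longrightarrow> f \<in> D.Ar \<Longrightarrow> g \<in> D.Ar \<Longrightarrow>
  D.dm f = D.dm e \<Longrightarrow> D.cd f = D.dm m \<Longrightarrow> D.dm g = D.cd e \<Longrightarrow> D.cd g = D.cd m \<Longrightarrow> D.cp g e = D.cp m f \<Longrightarrow>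
  \<exists>!d. d \<in> D.Ar \<and> D.dm d = D.cd e \<and> D.cd d = D.dm m \<and> D.cp d e = f \<and> D.cp m d = g"
  using ofs unfolding is_ofs_def by blast
lemma ofs_fact: "h \<in> D.Ar \<Longrightarrow> \<exists>e\<in>E. \<exists>m\<in>M. D.cd e = D.dm m \<and> D.cp m e = h"
  using ofs unfolding is_ofs_def by blast

abbreviation "E' \<equiv> lifted_E A D t E"
abbreviation "M' \<equiv> lifted_M A D t M"

definition "cart K L \<mu> \<longleftrightarrow> (\<forall>u\<in>A.Ar. is_pullback D (\<mu> (A.cd u)) (snd L u) (snd K u) (\<mu> (A.dm u)))"

lemma cart_iff: "cartesian_nat_trans A D (K, L, \<mu>) \<longleftrightarrow> cart K L \<mu>"
  by (simp add: cartesian_nat_trans_def cart_def)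

lemma E'_iff: "(F, G, \<eta>) \<in> E' \<longleftrightarrow> NT F G \<eta> \<and> \<eta> t \<in> E"
  by (simp add: lifted_E_def)
lemma M'_iff: "(F, G, \<eta>) \<in> M' \<longleftrightarrow> NT F G \<eta> \<and> cart F G \<eta> \<and> \<eta> t \<in> M"
  by (simp add: lifted_M_def cart_iff)

context
  fixes K L \<mu>
  assumes mu: "NT K L \<mu>" and ct: "cart K L \<mu>"
begin

lemma K: "isF K" using mu NT_F by blast
lemma L: "isF L" using mu NT_G by blast

lemma cart_bang: assumes x: "x \<in> A.Ob" shows "is_pullback D (\<mu> t) (snd L (bang x)) (snd K (bang x)) (\<mu> x)"
proof -
  note b = bang[OF x]
  have "is_pullback D (\<mu> (A.cd (bang x))) (snd L (bang x)) (snd K (bang x)) (\<mu> (A.dm (bang x)))"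
    using ct b(1) unfolding cart_def by (rule bspec)
  then show ?thesis using b by simp
qed

lemma K_unique: assumes x: "x \<in> A.Ob" and "a \<in> D.Ar" "b \<in> D.Ar" "D.dm a = D.dm b" "D.cd a = fst K x" "D.cd b = fst K x"
  "D.cp (snd K (bang x)) a = D.cp (snd K (bang x)) b" "D.cp (\<mu> x) a = D.cp (\<mu> x) b"
  shows "a = b"
  by (rule D.pb_unique[OF cart_bang[OF x]]) (use assms K bang[OF x] in simp_all)

end

lemma orth_FC:
  assumes e: "NT F B \<epsilon>" "\<epsilon> t \<in> E" and m: "NT K L \<mu>" "cart K L \<mu>" "\<mu> t \<in> M"
    and f: "NT F K \<phi>" and g: "NT B L \<gamma>"
    and sq: "\<And>x. x \<in> A.Ob \<Longrightarrow> D.cp (\<gamma> x) (\<epsilon> x) = D.cp (\<mu> x) (\<phi> x)"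
  shows "\<exists>!d. d \<in> carr FC \<and> cdom FC d = B \<and> ccod FC d = K \<and> ccomp FC d (F, B, \<epsilon>) = (F, K, \<phi>)
            \<and> ccomp FC (K, L, \<mu>) d = (B, L, \<gamma>)"
proof -
  have F: "isF F" and B: "isF B" and Kf: "isF K" and Lf: "isF L"
    using e m NT_F NT_G by blast+
  have tO: "t \<in> A.Ob" by simp
  have "\<exists>!d. d \<in> D.Ar \<and> D.dm d = D.cd (\<epsilon> t) \<and> D.cd d = D.dm (\<mu> t) \<and> D.cp d (\<epsilon> t) = \<phi> t \<and> D.cp (\<mu> t) d = \<gamma> t"
    by (rule orth) (use e m f g sq[OF tO] in simp_all)
  then obtain dt where dt0: "dt \<in> D.Ar \<and> D.dm dt = D.cd (\<epsilon> t) \<and> D.cd dt = D.dm (\<mu> t) \<and> D.cp dt (\<epsilon> t) = \<phi> t \<and> D.cp (\<mu> t) dt = \<gamma> t"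
    and dtu0: "\<forall>d. d \<in> D.Ar \<and> D.dm d = D.cd (\<epsilon> t) \<and> D.cd d = D.dm (\<mu> t) \<and> D.cp d (\<epsilon> t) = \<phi> t \<and> D.cp (\<mu> t) d = \<gamma> t \<longrightarrow> d = dt"
    by (elim ex1E) (rule that)
  have dt: "dt \<in> D.Ar" "D.dm dt = fst B t" "D.cd dt = fst K t" "D.cp dt (\<epsilon> t) = \<phi> t" "D.cp (\<mu> t) dt = \<gamma> t"
    using dt0 e m by simp_all
  have dtu: "d = dt" if "d \<in> D.Ar" "D.dm d = fst B t" "D.cd d = fst K t" "D.cp d (\<epsilon> t) = \<phi> t" "D.cp (\<mu> t) d = \<gamma> t" for d
    using dtu0 that e m by simp
  define d where "d x = (if x \<in> A.Ob then D.pbind (\<mu> t) (snd L (bang x)) (snd K (bang x)) (\<mu> x)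
      (D.cp dt (snd B (bang x))) (\<gamma> x) else undefined)" for x
  have dprops: "d x \<in> D.Ar \<and> D.dm (d x) = fst B x \<and> D.cd (d x) = fst K x \<and>
      D.cp (snd K (bang x)) (d x) = D.cp dt (snd B (bang x)) \<and> D.cp (\<mu> x) (d x) = \<gamma> x" if x: "x \<in> A.Ob" for x
  proof -
    note b = bang[OF x]
    have cond: "D.cp (\<mu> t) (D.cp dt (snd B (bang x))) = D.cp (snd L (bang x)) (\<gamma> x)"
    proof -
      have "D.cp (\<mu> t) (D.cp dt (snd B (bang x))) = D.cp (D.cp (\<mu> t) dt) (snd B (bang x))"
        using dt m B b by (intro D.assoc) simp_all
      also have "\<dots> = D.cp (\<gamma> t) (snd B (bang x))" using dt by simp
      also have "\<dots> = D.cp (snd L (bang x)) (\<gamma> x)" using NT_nat[OF g b(1)] b by simp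
      finally show ?thesis .
    qed
    note P = D.pbind[OF cart_bang[OF m(1,2) x], of "D.cp dt (snd B (bang x))" "\<gamma> x"]
    have c: "D.cp dt (snd B (bang x)) \<in> D.Ar" "\<gamma> x \<in> D.Ar" "D.dm (D.cp dt (snd B (bang x))) = D.dm (\<gamma> x)"
      "D.cd (D.cp dt (snd B (bang x))) = D.dm (\<mu> t)" "D.cd (\<gamma> x) = D.dm (snd L (bang x))"
      using dt b B g x m Lf by simp_all
    note P' = P[OF c cond]
    show ?thesis using P' x m Kf b dt B by (simp add: d_def)
  qed
  have dNT: "NT B K d"
  proof (rule NT_intro)
    show "isF B" "isF K" by (fact B, fact Kf)
    show "d x \<in> D.Ar \<and> D.dm (d x) = fst B x \<and> D.cd (d x) = fst K x" if "x \<in> A.Ob" for x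
      using dprops[OF that] by simp
    show "d x = undefined" if "x \<notin> A.Ob" for x using that by (simp add: d_def)
  next
    fix u assume u: "u \<in> A.Ar"
    have x: "A.dm u \<in> A.Ob" and y: "A.cd u \<in> A.Ob" using u by simp_all
    note dx = dprops[OF x] and dy = dprops[OF y] and bx = bang[OF x] and by' = bang[OF y]
    show "D.cp (d (A.cd u)) (snd B u) = D.cp (snd K u) (d (A.dm u))"
    proof (rule K_unique[OF m(1,2) y])
      show "D.cp (snd K (bang (A.cd u))) (D.cp (d (A.cd u)) (snd B u)) = D.cp (snd K (bang (A.cd u))) (D.cp (snd K u) (d (A.dm u)))"
      proof -
        have "D.cp (snd K (bang (A.cd u))) (D.cp (d (A.cd u)) (snd B u)) = D.cp (D.cp (snd K (bang (A.cd u))) (d (A.cd u))) (snd B u)"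
          using dy u B Kf by' by (intro D.assoc) simp_all
        also have "\<dots> = D.cp (D.cp dt (snd B (bang (A.cd u)))) (snd B u)" using dy by simp
        also have "\<dots> = D.cp dt (D.cp (snd B (bang (A.cd u))) (snd B u))" using dt u B by' by (intro D.assoc[symmetric]) simp_all
        also have "D.cp (snd B (bang (A.cd u))) (snd B u) = snd B (bang (A.dm u))"
          using F_comp[OF B u by'(1)] by' bang_comp[OF u] by simp
        also have "D.cp dt (snd B (bang (A.dm u))) = D.cp (snd K (bang (A.dm u))) (d (A.dm u))" using dx by simp
        also have "snd K (bang (A.dm u)) = D.cp (snd K (bang (A.cd u))) (snd K u)"
          using F_comp[OF Kf u by'(1)] by' bang_comp[OF u] by simp
        also have "D.cp (D.cp (snd K (bang (A.cd u))) (snd K u)) (d (A.dm u)) = D.cp (snd K (bang (A.cd u))) (D.cp (snd K u) (d (A.dm u)))"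
          using dx u Kf by' by (intro D.assoc[symmetric]) simp_all
        finally show ?thesis .
      qed
      show "D.cp (\<mu> (A.cd u)) (D.cp (d (A.cd u)) (snd B u)) = D.cp (\<mu> (A.cd u)) (D.cp (snd K u) (d (A.dm u)))"
      proof -
        have "D.cp (\<mu> (A.cd u)) (D.cp (d (A.cd u)) (snd B u)) = D.cp (D.cp (\<mu> (A.cd u)) (d (A.cd u))) (snd B u)"
          using dy u B m y by (intro D.assoc) simp_all
        also have "\<dots> = D.cp (\<gamma> (A.cd u)) (snd B u)" using dy by simp
        also have "\<dots> = D.cp (snd L u) (\<gamma> (A.dm u))" using NT_nat[OF g u] .
        also have "\<dots> = D.cp (snd L u) (D.cp (\<mu> (A.dm u)) (d (A.dm u)))" using dx by simp
        also have "\<dots> = D.cp (D.cp (snd L u) (\<mu> (A.dm u))) (d (A.dm u))" using dx u Lf m x by (intro D.assoc) simp_all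
        also have "\<dots> = D.cp (D.cp (\<mu> (A.cd u)) (snd K u)) (d (A.dm u))" using NT_nat[OF m(1) u] by simp
        also have "\<dots> = D.cp (\<mu> (A.cd u)) (D.cp (snd K u) (d (A.dm u)))" using dx u Kf m y by (intro D.assoc[symmetric]) simp_all
        finally show ?thesis .
      qed
    qed (use dx dy u B Kf in simp_all)
  qed
  have dt_eq: "d t = dt"
  proof -
    note d0 = dprops[OF tO]
    have "d t = dt"
    proof (rule K_unique[OF m(1,2) tO])
      show "D.cp (snd K (bang t)) (d t) = D.cp (snd K (bang t)) dt"
        using d0 dt Kf B by (simp add: bang_t)
      show "D.cp (\<mu> t) (d t) = D.cp (\<mu> t) dt" using d0 dt by simp
    qed (use d0 dt in simp_all)
    then show ?thesis .
  qed
  have comp1: "ccomp FC (B, K, d) (F, B, \<epsilon>) = (F, K, \<phi>)"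
  proof -
    have "D.cp (d x) (\<epsilon> x) = \<phi> x" if x: "x \<in> A.Ob" for x
    proof (rule K_unique[OF m(1,2) x])
      note dx = dprops[OF x] and b = bang[OF x]
      show "D.cp (snd K (bang x)) (D.cp (d x) (\<epsilon> x)) = D.cp (snd K (bang x)) (\<phi> x)"
      proof -
        have "D.cp (snd K (bang x)) (D.cp (d x) (\<epsilon> x)) = D.cp (D.cp (snd K (bang x)) (d x)) (\<epsilon> x)"
          using dx e x Kf b by (intro D.assoc) simp_all
        also have "\<dots> = D.cp (D.cp dt (snd B (bang x))) (\<epsilon> x)" using dx by simp
        also have "\<dots> = D.cp dt (D.cp (snd B (bang x)) (\<epsilon> x))" using dt e x B b by (intro D.assoc[symmetric]) simp_all
        also have "D.cp (snd B (bang x)) (\<epsilon> x) = D.cp (\<epsilon> t) (snd F (bang x))" using NT_nat[OF e(1) b(1)] b by simp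
        also have "D.cp dt (D.cp (\<epsilon> t) (snd F (bang x))) = D.cp (D.cp dt (\<epsilon> t)) (snd F (bang x))"
          using dt e F b by (intro D.assoc) simp_all
        also have "\<dots> = D.cp (\<phi> t) (snd F (bang x))" using dt by simp
        also have "\<dots> = D.cp (snd K (bang x)) (\<phi> x)" using NT_nat[OF f b(1)] b by simp
        finally show ?thesis .
      qed
      show "D.cp (\<mu> x) (D.cp (d x) (\<epsilon> x)) = D.cp (\<mu> x) (\<phi> x)"
      proof -
        have "D.cp (\<mu> x) (D.cp (d x) (\<epsilon> x)) = D.cp (D.cp (\<mu> x) (d x)) (\<epsilon> x)"
          using dx e x m by (intro D.assoc) simp_all
        also have "\<dots> = D.cp (\<gamma> x) (\<epsilon> x)" using dx by simp
        finally show ?thesis using sq[OF x] by simp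
      qed
    qed (use dprops[OF x] e f x in simp_all)
    moreover have "(\<lambda>x. if x \<in> A.Ob then D.cp (d x) (\<epsilon> x) else undefined) = \<phi>"
    proof (rule ext)
      fix x show "(if x \<in> A.Ob then D.cp (d x) (\<epsilon> x) else undefined) = \<phi> x"
        using calculation[of x] NT_ext[OF f, of x] by (cases "x \<in> A.Ob") simp_all
    qed
    ultimately show ?thesis by simp
  qed
  have comp2: "ccomp FC (K, L, \<mu>) (B, K, d) = (B, L, \<gamma>)"
  proof -
    have "(\<lambda>x. if x \<in> A.Ob then D.cp (\<mu> x) (d x) else undefined) = \<gamma>"
    proof (rule ext)
      fix x show "(if x \<in> A.Ob then D.cp (\<mu> x) (d x) else undefined) = \<gamma> x"
        using dprops[of x] NT_ext[OF g, of x] by (cases "x \<in> A.Ob") simp_all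
    qed
    then show ?thesis by simp
  qed
  show ?thesis
  proof (rule ex1I[of _ "(B, K, d)"])
    show "(B, K, d) \<in> carr FC \<and> cdom FC (B, K, d) = B \<and> ccod FC (B, K, d) = K \<and>
      ccomp FC (B, K, d) (F, B, \<epsilon>) = (F, K, \<phi>) \<and> ccomp FC (K, L, \<mu>) (B, K, d) = (B, L, \<gamma>)"
      using dNT comp1 comp2 by simp
  next
    fix d' assume H: "d' \<in> carr FC \<and> cdom FC d' = B \<and> ccod FC d' = K \<and>
      ccomp FC d' (F, B, \<epsilon>) = (F, K, \<phi>) \<and> ccomp FC (K, L, \<mu>) d' = (B, L, \<gamma>)"
    then obtain B' K' \<delta> where d': "d' = (B', K', \<delta>)" "NT B' K' \<delta>" by (metis FC_arr_cases)
    have "B' = B" "K' = K" using H d' by simp_all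
    with d' H have dN: "NT B K \<delta>" and c1: "(\<lambda>x. if x \<in> A.Ob then D.cp (\<delta> x) (\<epsilon> x) else undefined) = \<phi>"
      and c2: "(\<lambda>x. if x \<in> A.Ob then D.cp (\<mu> x) (\<delta> x) else undefined) = \<gamma>"
      by simp_all
    have c1': "D.cp (\<delta> x) (\<epsilon> x) = \<phi> x" if "x \<in> A.Ob" for x using fun_cong[OF c1, of x] that by simp
    have c2': "D.cp (\<mu> x) (\<delta> x) = \<gamma> x" if "x \<in> A.Ob" for x using fun_cong[OF c2, of x] that by simp
    have dt': "\<delta> t = dt" by (rule dtu) (use dN c1'[OF tO] c2'[OF tO] in simp_all)
    have "\<delta> = d"
    proof (rule NT_eqI[OF dN dNT])
      fix x assume x: "x \<in> A.Ob"
      note dx = dprops[OF x] and b = bang[OF x]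
      show "\<delta> x = d x"
      proof (rule K_unique[OF m(1,2) x])
        show "D.cp (snd K (bang x)) (\<delta> x) = D.cp (snd K (bang x)) (d x)"
          using NT_nat[OF dN b(1)] b dx dt' by simp
        show "D.cp (\<mu> x) (\<delta> x) = D.cp (\<mu> x) (d x)" using c2'[OF x] dx by simp
      qed (use dx dN x in simp_all)
    qed
    then show "d' = (B, K, d)" using d' \<open>B' = B\<close> \<open>K' = K\<close> by simp
  qed
qed

end


context ctx3
begin

lemma comp_t: "snd (snd (ccomp FC (G', H, \<theta>) (F, G, \<eta>))) t = D.cp (\<theta> t) (\<eta> t)"
  by simp

theorem FC_ofs: "is_ofs FC E' M'"
  unfolding is_ofs_def
proof (intro conjI allI impI ballI)
  show "E' \<subseteq> carr FC" unfolding lifted_E_def by (rule subsetI) (erule CollectE, erule conjE)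
  show "M' \<subseteq> carr FC" unfolding lifted_M_def by (rule subsetI) (erule CollectE, erule conjE)
next
  fix f assume iso: "is_iso FC f"
  then have "f \<in> carr FC" by (rule FC.iso_arr)
  then obtain F G \<eta> where f: "f = (F, G, \<eta>)" "NT F G \<eta>" by (rule FC_arr_cases)
  have isos: "is_iso D (\<eta> x)" if "x \<in> A.Ob" for x using FC_iso_comp[OF iso[unfolded f(1)] that] .
  have Fs: "isF F" "isF G" using f NT_F NT_G by blast+
  have "cart F G \<eta>" unfolding cart_def
  proof
    fix u assume u: "u \<in> A.Ar"
    have x: "A.dm u \<in> A.Ob" and y: "A.cd u \<in> A.Ob" using u by simp_all
    show "is_pullback D (\<eta> (A.cd u)) (snd G u) (snd F u) (\<eta> (A.dm u))"
      by (rule D.pb_iso) (use f(2) x y u Fs NT_nat[OF f(2) u] isos[OF x] isos[OF y] in simp_all)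
  qed
  then show "f \<in> E'" "f \<in> M'" using f isos[of t] iso_E iso_M by (simp_all add: E'_iff M'_iff)
next
  fix f g assume fE: "f \<in> E'" and gE: "g \<in> E'" and c: "ccod FC f = cdom FC g"
  obtain F G \<eta> where f: "f = (F, G, \<eta>)" by (rule prod_cases3)
  obtain G' H \<theta> where g: "g = (G', H, \<theta>)" by (rule prod_cases3)
  have GG: "G' = G" using c f g by simp
  have fN: "NT F G \<eta>" "\<eta> t \<in> E" using fE f by (simp_all add: E'_iff)
  have gN: "NT G H \<theta>" "\<theta> t \<in> E" using gE g GG by (simp_all add: E'_iff)
  have "D.cp (\<theta> t) (\<eta> t) \<in> E" by (rule E_comp) (use fN gN in simp_all)
  then show "ccomp FC g f \<in> E'" using NT_comp[OF fN(1) gN(1)] f g GG by (simp add: E'_iff)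
next
  fix f g assume fM: "f \<in> M'" and gM: "g \<in> M'" and c: "ccod FC f = cdom FC g"
  obtain F G \<eta> where f: "f = (F, G, \<eta>)" by (rule prod_cases3)
  obtain G' H \<theta> where g: "g = (G', H, \<theta>)" by (rule prod_cases3)
  have GG: "G' = G" using c f g by simp
  have fN: "NT F G \<eta>" "cart F G \<eta>" "\<eta> t \<in> M" using fM f by (simp_all add: M'_iff)
  have gN: "NT G H \<theta>" "cart G H \<theta>" "\<theta> t \<in> M" using gM g GG by (simp_all add: M'_iff)
  have "D.cp (\<theta> t) (\<eta> t) \<in> M" by (rule M_comp) (use fN gN in simp_all)
  moreover have "cart F H (\<lambda>x. if x \<in> A.Ob then D.cp (\<theta> x) (\<eta> x) else undefined)"
    unfolding cart_def
  proof
    fix u assume u: "u \<in> A.Ar"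
    have x: "A.dm u \<in> A.Ob" and y: "A.cd u \<in> A.Ob" using u by simp_all
    have P1: "is_pullback D (\<theta> (A.cd u)) (snd H u) (snd G u) (\<theta> (A.dm u))" using gN(2) u unfolding cart_def by blast
    have P2: "is_pullback D (\<eta> (A.cd u)) (snd G u) (snd F u) (\<eta> (A.dm u))" using fN(2) u unfolding cart_def by blast
    show "is_pullback D ((\<lambda>x. if x \<in> A.Ob then D.cp (\<theta> x) (\<eta> x) else undefined) (A.cd u)) (snd H u) (snd F u)
        ((\<lambda>x. if x \<in> A.Ob then D.cp (\<theta> x) (\<eta> x) else undefined) (A.dm u))"
      using D.pb_paste[OF P1 P2] x y by simp
  qed
  ultimately show "ccomp FC g f \<in> M'" using NT_comp[OF fN(1) gN(1)] f g GG by (simp add: M'_iff)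
next
  fix e m f g assume eE: "e \<in> E'" and mM: "m \<in> M'" and f: "f \<in> carr FC" and g: "g \<in> carr FC"
    and c: "cdom FC f = cdom FC e \<and> ccod FC f = cdom FC m \<and> cdom FC g = ccod FC e \<and> ccod FC g = ccod FC m \<and>
        ccomp FC g e = ccomp FC m f"
  obtain F B \<epsilon> where e: "e = (F, B, \<epsilon>)" by (rule prod_cases3)
  obtain K L \<mu> where m: "m = (K, L, \<mu>)" by (rule prod_cases3)
  obtain F' K' \<phi> where f': "f = (F', K', \<phi>)" by (rule prod_cases3)
  obtain B' L' \<gamma> where g': "g = (B', L', \<gamma>)" by (rule prod_cases3)
  note c1 = conjunct1[OF c] and c2 = conjunct1[OF conjunct2[OF c]]
    and c3 = conjunct1[OF conjunct2[OF conjunct2[OF c]]] and c4 = conjunct1[OF conjunct2[OF conjunct2[OF conjunct2[OF c]]]]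
    and c5 = conjunct2[OF conjunct2[OF conjunct2[OF conjunct2[OF c]]]]
  have eq1: "F' = F" using c1 unfolding e f' by (simp only: FC_dm)
  have eq2: "K' = K" using c2 unfolding m f' by (simp only: FC_dm FC_cd)
  have eq3: "B' = B" using c3 unfolding e g' by (simp only: FC_dm FC_cd)
  have eq4: "L' = L" using c4 unfolding m g' by (simp only: FC_dm FC_cd)
  note eq = eq1 eq2 eq3 eq4
  have eN0: "NT F B \<epsilon> \<and> \<epsilon> t \<in> E" using eE unfolding e E'_iff .
  note eN = conjunct1[OF eN0] conjunct2[OF eN0]
  have mN0: "NT K L \<mu> \<and> cart K L \<mu> \<and> \<mu> t \<in> M" using mM unfolding m M'_iff .
  note mN = conjunct1[OF mN0] conjunct1[OF conjunct2[OF mN0]] conjunct2[OF conjunct2[OF mN0]]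
  have fN: "NT F K \<phi>" using f unfolding f' eq1 eq2 .
  have gN: "NT B L \<gamma>" using g unfolding g' eq3 eq4 .
  have c5': "(F, L, \<lambda>x. if x \<in> A.Ob then D.cp (\<gamma> x) (\<epsilon> x) else undefined) = (F, L, \<lambda>x. if x \<in> A.Ob then D.cp (\<mu> x) (\<phi> x) else undefined)"
    using c5 unfolding e m f' g' eq by (simp only: FC_comp)
  have lam: "(\<lambda>x. if x \<in> A.Ob then D.cp (\<gamma> x) (\<epsilon> x) else undefined) = (\<lambda>x. if x \<in> A.Ob then D.cp (\<mu> x) (\<phi> x) else undefined)"
    using arg_cong[OF c5', of "\<lambda>z. snd (snd z)"] by (simp only: snd_conv)
  have sq: "D.cp (\<gamma> x) (\<epsilon> x) = D.cp (\<mu> x) (\<phi> x)" if "x \<in> A.Ob" for x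
    using fun_cong[OF lam, of x] that by simp
  show "\<exists>!d. d \<in> carr FC \<and> cdom FC d = ccod FC e \<and> ccod FC d = cdom FC m \<and> ccomp FC d e = f \<and> ccomp FC m d = g"
    using orth_FC[OF eN mN fN gN sq] unfolding e m f' g' eq by (simp only: FC_dm FC_cd)
next
  fix h assume h: "h \<in> carr FC"
  then obtain F G \<eta> where h': "h = (F, G, \<eta>)" "NT F G \<eta>" by (rule FC_arr_cases)
  have Fs: "isF F" "isF G" using h' NT_F NT_G by blast+
  have "\<eta> t \<in> D.Ar" using h' by simp
  then obtain e0 m0 where e0: "e0 \<in> E" and m0: "m0 \<in> M" and em: "D.cd e0 = D.dm m0" "D.cp m0 e0 = \<eta> t"
    using ofs_fact by blast
  have e0A: "e0 \<in> D.Ar" and m0A: "m0 \<in> D.Ar" using e0 m0 E_sub M_sub by blast+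
  have "D.dm e0 = D.dm (D.cp m0 e0)" using D.comp_dm[OF e0A m0A em(1)] by (rule sym)
  also have "\<dots> = fst F t" using em h' by simp
  finally have dme0: "D.dm e0 = fst F t" .
  have "D.cd m0 = D.cd (D.cp m0 e0)" using D.comp_cd[OF e0A m0A em(1)] by (rule sym)
  also have "\<dots> = fst G t" using em h' by simp
  finally have cdm0: "D.cd m0 = fst G t" .
  note I = ind_NT[OF Fs(2) m0A cdm0 h'(2) e0A dme0 em(1) em(2)]
  note It = ind_t[OF Fs(2) m0A cdm0 h'(2) e0A dme0 em(1) em(2)]
  note Ic = ind_comp[OF Fs(2) m0A cdm0 h'(2) e0A dme0 em(1) em(2)]
  have eE: "(F, PBF G m0, ind G m0 F \<eta> e0) \<in> E'" using I It e0 by (simp add: E'_iff)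
  have mM: "(PBF G m0, G, qt G m0) \<in> M'"
    using qt_NT[OF Fs(2) m0A cdm0] qt_cart[OF Fs(2) m0A cdm0] qt_t[OF Fs(2) m0A cdm0] m0
    by (simp add: M'_iff cart_iff)
  show "\<exists>e\<in>E'. \<exists>m\<in>M'. ccod FC e = cdom FC m \<and> ccomp FC m e = h"
    by (rule bexI[OF _ eE], rule bexI[OF _ mM]) (use Ic h' in simp)
qed

end


lemma slice_obj_iff: "(S, s) \<in> cobj (slice C N X) \<longleftrightarrow> s \<in> N \<and> cdom C s = S \<and> ccod C s = X"
  by (simp only: slice_def category.simps mem_Collect_eq case_prod_conv)

lemma slice_arr_iff: "((S, s), (S', s'), f) \<in> carr (slice C N X) \<longleftrightarrow>
   s \<in> N \<and> cdom C s = S \<and> ccod C s = X \<and> s' \<in> N \<and> cdom C s' = S' \<and> ccod C s' = X \<and>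
   f \<in> carr C \<and> cdom C f = S \<and> ccod C f = S' \<and> ccomp C s' f = s"
  by (simp only: slice_def category.simps mem_Collect_eq case_prod_conv)

lemma slice_dm[simp]: "cdom (slice C N X) (a, b, f) = a" by (simp add: slice_def)
lemma slice_cd[simp]: "ccod (slice C N X) (a, b, f) = b" by (simp add: slice_def)
lemma slice_id[simp]: "cid (slice C N X) (S, s) = ((S, s), (S, s), cid C S)" by (simp add: slice_def)
lemma slice_comp[simp]: "ccomp (slice C N X) (b', c, g) (a, b, f) = (a, c, ccomp C g f)" by (simp add: slice_def)

lemma shape5: obtains S s S' s' f where "x = ((S, s), (S', s'), f)"
proof -
  obtain a b f where x: "x = (a, b, f)" by (rule prod_cases3)
  obtain S s where a: "a = (S, s)" by (rule prod.exhaust)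
  obtain S' s' where b: "b = (S', s')" by (rule prod.exhaust)
  show ?thesis using that x a b by blast
qed

context ctx3
begin

definition "Fo x = (fst (fst x) t, snd (snd (snd x)) t)"
definition "Fa x = (Fo (fst x), Fo (fst (snd x)), snd (snd (snd (snd x))) t)"
definition "Go G x = (PBF G (snd x), (PBF G (snd x), G, qt G (snd x)))"
definition "Ga G x = (Go G (fst x), Go G (fst (snd x)),
   (PBF G (snd (fst x)), PBF G (snd (fst (snd x))),
    ind G (snd (fst (snd x))) (PBF G (snd (fst x))) (qt G (snd (fst x))) (snd (snd x))))"
definition "eta G x = (x, Go G (Fo x),
   (fst x, PBF G (snd (snd (snd x)) t),
    ind G (snd (snd (snd x)) t) (fst x) (snd (snd (snd x))) (D.idc (fst (fst x) t))))"
definition "eps G x = cid (slice D M (fst G t)) x"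

lemma Fo_simp[simp]: "Fo (S, (S', G', \<sigma>)) = (fst S t, \<sigma> t)" by (simp add: Fo_def)
lemma Fa_simp[simp]: "Fa (a, b, (S, S', \<phi>)) = (Fo a, Fo b, \<phi> t)" by (simp add: Fa_def)
lemma Go_simp[simp]: "Go G (K, m) = (PBF G m, (PBF G m, G, qt G m))" by (simp add: Go_def)
lemma Ga_simp[simp]: "Ga G ((K, m), (K', m'), f) = (Go G (K, m), Go G (K', m'),
   (PBF G m, PBF G m', ind G m' (PBF G m) (qt G m) f))" by (simp add: Ga_def)
lemma eta_simp[simp]: "eta G (S, (S', G', \<sigma>)) = ((S, (S', G', \<sigma>)), Go G (fst S t, \<sigma> t),
   (S, PBF G (\<sigma> t), ind G (\<sigma> t) S \<sigma> (D.idc (fst S t))))" by (simp add: eta_def)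

context
  fixes G assumes G: "isF G"
begin

abbreviation "C1 \<equiv> slice FC M' G"
abbreviation "C2 \<equiv> slice D M (fst G t)"

lemma C1_objE: assumes "x \<in> cobj C1"
  obtains S \<sigma> where "x = (S, (S, G, \<sigma>))" "NT S G \<sigma>" "cart S G \<sigma>" "\<sigma> t \<in> M"
proof -
  obtain S s where x: "x = (S, s)" by (rule prod.exhaust)
  obtain S' G' \<sigma> where s: "s = (S', G', \<sigma>)" by (rule prod_cases3)
  have H: "s \<in> M' \<and> cdom FC s = S \<and> ccod FC s = G" using assms unfolding x slice_obj_iff .
  have e1: "S' = S" and e2: "G' = G" using H unfolding s by simp_all
  have "(S, G, \<sigma>) \<in> M'" using H unfolding s e1 e2 by (elim conjE)
  then have H2: "NT S G \<sigma> \<and> cart S G \<sigma> \<and> \<sigma> t \<in> M" unfolding M'_iff .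
  have x': "x = (S, (S, G, \<sigma>))" unfolding x s e1 e2 ..
  show ?thesis using H2 apply (elim conjE) by (rule that[OF x'])
qed

lemma C1_objI: "NT S G \<sigma> \<Longrightarrow> cart S G \<sigma> \<Longrightarrow> \<sigma> t \<in> M \<Longrightarrow> (S, (S, G, \<sigma>)) \<in> cobj C1"
  unfolding slice_obj_iff M'_iff by simp

lemma C1_arrE: assumes "x \<in> carr C1"
  obtains S \<sigma> S' \<sigma>' \<phi> where "x = ((S, (S, G, \<sigma>)), (S', (S', G, \<sigma>')), (S, S', \<phi>))"
    "NT S G \<sigma>" "cart S G \<sigma>" "\<sigma> t \<in> M" "NT S' G \<sigma>'" "cart S' G \<sigma>'" "\<sigma>' t \<in> M" "NT S S' \<phi>"
    "\<And>y. y \<in> A.Ob \<Longrightarrow> D.cp (\<sigma>' y) (\<phi> y) = \<sigma> y"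
proof -
  obtain S s S' s' f where x: "x = ((S, s), (S', s'), f)" by (rule shape5)
  obtain S1 G1 \<sigma> where s: "s = (S1, G1, \<sigma>)" by (rule prod_cases3)
  obtain S2 G2 \<sigma>' where s': "s' = (S2, G2, \<sigma>')" by (rule prod_cases3)
  obtain S3 S4 \<phi> where f: "f = (S3, S4, \<phi>)" by (rule prod_cases3)
  have H: "s \<in> M' \<and> cdom FC s = S \<and> ccod FC s = G \<and> s' \<in> M' \<and> cdom FC s' = S' \<and> ccod FC s' = G \<and>
   f \<in> carr FC \<and> cdom FC f = S \<and> ccod FC f = S' \<and> ccomp FC s' f = s"
    using assms unfolding x slice_arr_iff .
  have e: "S1 = S" "G1 = G" "S2 = S'" "G2 = G" "S3 = S" "S4 = S'" using H unfolding s s' f by simp_all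
  have m1: "(S, G, \<sigma>) \<in> M'" and m2: "(S', G, \<sigma>') \<in> M'" and fN: "NT S S' \<phi>"
    and c: "ccomp FC (S', G, \<sigma>') (S, S', \<phi>) = (S, G, \<sigma>)"
    using H unfolding s s' f e by simp_all
  have lam: "(\<lambda>y. if y \<in> A.Ob then D.cp (\<sigma>' y) (\<phi> y) else undefined) = \<sigma>"
    using c by simp
  have comp: "D.cp (\<sigma>' y) (\<phi> y) = \<sigma> y" if "y \<in> A.Ob" for y
    using fun_cong[OF lam, of y] that by simp
  show ?thesis
    apply (rule that[of S \<sigma> S' \<sigma>' \<phi>])
    using x s s' f e m1 m2 fN comp unfolding M'_iff by simp_all
qed

lemma C1_arrI:
  assumes "NT S G \<sigma>" "cart S G \<sigma>" "\<sigma> t \<in> M" "NT S' G \<sigma>'" "cart S' G \<sigma>'" "\<sigma>' t \<in> M" "NT S S' \<phi>"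
    "\<And>y. y \<in> A.Ob \<Longrightarrow> D.cp (\<sigma>' y) (\<phi> y) = \<sigma> y"
  shows "((S, (S, G, \<sigma>)), (S', (S', G, \<sigma>')), (S, S', \<phi>)) \<in> carr C1"
proof -
  have lam: "(\<lambda>y. if y \<in> A.Ob then D.cp (\<sigma>' y) (\<phi> y) else undefined) = \<sigma>"
  proof (rule ext)
    fix y show "(if y \<in> A.Ob then D.cp (\<sigma>' y) (\<phi> y) else undefined) = \<sigma> y"
      using assms(8)[of y] NT_ext[OF assms(1), of y] by (cases "y \<in> A.Ob") simp_all
  qed
  show ?thesis unfolding slice_arr_iff M'_iff using assms lam by simp
qed

lemma C2_objE: assumes "x \<in> cobj C2"
  obtains K m where "x = (K, m)" "m \<in> M" "D.dm m = K" "D.cd m = fst G t"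
proof -
  obtain K m where x: "x = (K, m)" by (rule prod.exhaust)
  show ?thesis using assms that x unfolding x slice_obj_iff by blast
qed

lemma C2_arrE: assumes "x \<in> carr C2"
  obtains K m K' m' f where "x = ((K, m), (K', m'), f)" "m \<in> M" "D.dm m = K" "D.cd m = fst G t"
    "m' \<in> M" "D.dm m' = K'" "D.cd m' = fst G t" "f \<in> D.Ar" "D.dm f = K" "D.cd f = K'" "D.cp m' f = m"
proof -
  obtain K m K' m' f where x: "x = ((K, m), (K', m'), f)" by (rule shape5)
  have H: "m \<in> M \<and> D.dm m = K \<and> D.cd m = fst G t \<and> m' \<in> M \<and> D.dm m' = K' \<and> D.cd m' = fst G t \<and>
    f \<in> D.Ar \<and> D.dm f = K \<and> D.cd f = K' \<and> D.cp m' f = m" using assms unfolding x slice_arr_iff .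
  show ?thesis using H apply (elim conjE) by (rule that[OF x])
qed

end

end


context ctx3
begin

context
  fixes G assumes G: "isF G"
begin

lemma FoFa: "functor_maps (C1 G) (C2 G) Fo Fa"
  unfolding functor_maps_def
proof (intro conjI ballI impI)
  fix x assume "x \<in> cobj (C1 G)"
  then obtain S \<sigma> where x: "x = (S, (S, G, \<sigma>))" "NT S G \<sigma>" "cart S G \<sigma>" "\<sigma> t \<in> M" by (rule C1_objE[OF G])
  show "Fo x \<in> cobj (C2 G)" unfolding x(1) Fo_simp slice_obj_iff using x by simp
  show "Fa (cid (C1 G) x) = cid (C2 G) (Fo x)" unfolding x(1) using x by (simp add: FC_id)
next
  fix f assume "f \<in> carr (C1 G)"
  then obtain S \<sigma> S' \<sigma>' \<phi> where f: "f = ((S, (S, G, \<sigma>)), (S', (S', G, \<sigma>')), (S, S', \<phi>))"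
    "NT S G \<sigma>" "cart S G \<sigma>" "\<sigma> t \<in> M" "NT S' G \<sigma>'" "cart S' G \<sigma>'" "\<sigma>' t \<in> M" "NT S S' \<phi>"
    "\<And>y. y \<in> A.Ob \<Longrightarrow> D.cp (\<sigma>' y) (\<phi> y) = \<sigma> y" by (rule C1_arrE[OF G]) (rule that; assumption)
  have "((fst S t, \<sigma> t), (fst S' t, \<sigma>' t), \<phi> t) \<in> carr (C2 G)"
    unfolding slice_arr_iff using f(2-8) f(9)[OF t_obj] by simp
  then show "Fa f \<in> carr (C2 G)" "cdom (C2 G) (Fa f) = Fo (cdom (C1 G) f)" "ccod (C2 G) (Fa f) = Fo (ccod (C1 G) f)"
    unfolding f(1) by simp_all
next
  fix f g assume "f \<in> carr (C1 G)" "g \<in> carr (C1 G)" and c: "ccod (C1 G) f = cdom (C1 G) g"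
  obtain S \<sigma> S' \<sigma>' \<phi> where f: "f = ((S, (S, G, \<sigma>)), (S', (S', G, \<sigma>')), (S, S', \<phi>))"
    using \<open>f \<in> carr (C1 G)\<close> by (rule C1_arrE[OF G])
  obtain T \<tau> T' \<tau>' \<psi> where g: "g = ((T, (T, G, \<tau>)), (T', (T', G, \<tau>')), (T, T', \<psi>))"
    using \<open>g \<in> carr (C1 G)\<close> by (rule C1_arrE[OF G])
  have "T = S'" using c f g by simp
  then show "Fa (ccomp (C1 G) g f) = ccomp (C2 G) (Fa g) (Fa f)" using c f g by simp
qed

lemma FoGo: assumes "m \<in> M" "D.dm m = K" "D.cd m = fst G t" shows "Fo (Go G (K, m)) = (K, m)"
proof -
  have m: "m \<in> D.Ar" using assms M_sub by blast
  show ?thesis using assms P0_t[OF G m assms(3)] qt_t[OF G m assms(3)] by (simp add: PBF_simps[OF G m assms(3)])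
qed

lemma Go_obj: assumes "m \<in> M" "D.cd m = fst G t" shows "Go G (K, m) \<in> cobj (C1 G)"
proof -
  have m: "m \<in> D.Ar" using assms M_sub by blast
  show ?thesis unfolding Go_simp
    by (rule C1_objI[OF G]) (use qt_NT[OF G m assms(2)] qt_cart[OF G m assms(2)] qt_t[OF G m assms(2)] assms in
      \<open>simp_all add: cart_iff\<close>)
qed

lemma ind_prems: assumes "m \<in> M" "D.dm m = K" "D.cd m = fst G t" "m' \<in> M" "D.cd m' = fst G t"
    "f \<in> D.Ar" "D.dm f = K" "D.cd f = D.dm m'" "D.cp m' f = m"
  shows "m \<in> D.Ar" "m' \<in> D.Ar" "NT (PBF G m) G (qt G m)" "D.dm f = fst (PBF G m) t" "D.cp m' f = qt G m t"
proof -
  show mA: "m \<in> D.Ar" and "m' \<in> D.Ar" using assms M_sub by blast+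
  show "NT (PBF G m) G (qt G m)" by (rule qt_NT[OF G mA assms(3)])
  show "D.dm f = fst (PBF G m) t" using assms P0_t[OF G mA assms(3)] by (simp add: PBF_simps[OF G mA assms(3)])
  show "D.cp m' f = qt G m t" using assms qt_t[OF G mA assms(3)] by simp
qed

lemma Ga_arr:
  assumes m: "m \<in> M" "D.dm m = K" "D.cd m = fst G t" and m': "m' \<in> M" "D.dm m' = K'" "D.cd m' = fst G t"
    and f: "f \<in> D.Ar" "D.dm f = K" "D.cd f = K'" "D.cp m' f = m"
  shows "((PBF G m, (PBF G m, G, qt G m)), (PBF G m', (PBF G m', G, qt G m')),
     (PBF G m, PBF G m', ind G m' (PBF G m) (qt G m) f)) \<in> carr (C1 G)"
proof -
  have fc: "D.cd f = D.dm m'" using f m' by simp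
  note P = ind_prems[OF m m'(1,3) f(1,2) fc f(4)]
  note I = ind_NT[OF G P(2) m'(3) P(3) f(1) P(4) fc P(5)] and Ii = ind[OF G P(2) m'(3) P(3) f(1) P(4) fc P(5)]
  show ?thesis
  proof (rule C1_arrI[OF G])
    show "NT (PBF G m) G (qt G m)" "NT (PBF G m') G (qt G m')" using qt_NT[OF G] P m' by simp_all
    show "cart (PBF G m) G (qt G m)" "cart (PBF G m') G (qt G m')" using qt_cart[OF G] P m m' by (simp_all add: cart_iff)
    show "qt G m t \<in> M" "qt G m' t \<in> M" using qt_t[OF G] P m m' by simp_all
    show "NT (PBF G m) (PBF G m') (ind G m' (PBF G m) (qt G m) f)" by (rule I)
    fix y assume y: "y \<in> A.Ob"
    show "D.cp (qt G m' y) (ind G m' (PBF G m) (qt G m) f y) = qt G m y"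
      using Ii(5)[OF y] y by (simp add: qt_def[of G m' y])
  qed
qed

lemma GoGa: "functor_maps (C2 G) (C1 G) (Go G) (Ga G)"
  unfolding functor_maps_def
proof (intro conjI ballI impI)
  fix x assume "x \<in> cobj (C2 G)"
  then obtain K m where x: "x = (K, m)" "m \<in> M" "D.dm m = K" "D.cd m = fst G t" by (rule C2_objE[OF G])
  have mA: "m \<in> D.Ar" using x M_sub by blast
  show "Go G x \<in> cobj (C1 G)" unfolding x(1) by (rule Go_obj) (use x in simp_all)
  show "Ga G (cid (C2 G) x) = cid (C1 G) (Go G x)"
  proof -
    have Kc: "D.cd (D.idc K) = D.dm m" "D.idc K \<in> D.Ar" "D.cp m (D.idc K) = m" using x mA by auto
    note P = ind_prems[OF x(2-4) x(2,4) Kc(2) _ Kc(1,3)]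
    have dK: "D.dm (D.idc K) = K" using x mA by auto
    note P = P[OF dK]
    note Ii = ind[OF G P(2) x(4) P(3) Kc(2) P(4) Kc(1) P(5)]
    note I = ind_NT[OF G P(2) x(4) P(3) Kc(2) P(4) Kc(1) P(5)]
    have "ind G m (PBF G m) (qt G m) (D.idc K) = (\<lambda>y. if y \<in> A.Ob then D.idc (fst (PBF G m) y) else undefined)"
    proof (rule NT_eqI[OF I NT_id[OF PBF_functor[OF G mA x(4)]]])
      fix y assume y: "y \<in> A.Ob"
      have "D.idc (P0 G m y) = ind G m (PBF G m) (qt G m) (D.idc K) y"
      proof (rule ind_unique[OF G P(2) x(4) P(3) Kc(2) P(4) Kc(1) P(5) y])
        show "D.cp (pp G m y) (D.idc (P0 G m y)) = D.cp (D.idc K) (snd (PBF G m) (bang y))"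
          using pp_hom[OF G mA x(4) y] P1_bang[OF G mA x(4) y] x by (simp add: PBF_simps[OF G mA x(4)])
        show "D.cp (pq G m y) (D.idc (P0 G m y)) = qt G m y"
          using pq_hom[OF G mA x(4) y] y by (simp add: qt_def)
      qed (use y P0_obj[OF G mA x(4) y] in \<open>simp_all add: PBF_simps[OF G mA x(4)]\<close>)
      then show "ind G m (PBF G m) (qt G m) (D.idc K) y = (if y \<in> A.Ob then D.idc (fst (PBF G m) y) else undefined)"
        using y by (simp add: PBF_simps[OF G mA x(4)])
    qed
    then show ?thesis unfolding x(1) by (simp add: FC_id)
  qed
next
  fix f assume "f \<in> carr (C2 G)"
  then obtain K m K' m' \<phi> where f: "f = ((K, m), (K', m'), \<phi>)" "m \<in> M" "D.dm m = K" "D.cd m = fst G t"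
    "m' \<in> M" "D.dm m' = K'" "D.cd m' = fst G t" "\<phi> \<in> D.Ar" "D.dm \<phi> = K" "D.cd \<phi> = K'" "D.cp m' \<phi> = m"
    by (rule C2_arrE[OF G])
  show "Ga G f \<in> carr (C1 G)" unfolding f(1) Ga_simp Go_simp by (rule Ga_arr[OF f(2-11)])
  show "cdom (C1 G) (Ga G f) = Go G (cdom (C2 G) f)" "ccod (C1 G) (Ga G f) = Go G (ccod (C2 G) f)"
    unfolding f(1) by simp_all
next
  fix f g assume "f \<in> carr (C2 G)" "g \<in> carr (C2 G)" and c: "ccod (C2 G) f = cdom (C2 G) g"
  obtain K m K' m' \<phi> where f: "f = ((K, m), (K', m'), \<phi>)" "m \<in> M" "D.dm m = K" "D.cd m = fst G t"
    "m' \<in> M" "D.dm m' = K'" "D.cd m' = fst G t" "\<phi> \<in> D.Ar" "D.dm \<phi> = K" "D.cd \<phi> = K'" "D.cp m' \<phi> = m"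
    using \<open>f \<in> carr (C2 G)\<close> by (rule C2_arrE[OF G])
  obtain L n L' n' \<psi> where g: "g = ((L, n), (L', n'), \<psi>)" "n \<in> M" "D.dm n = L" "D.cd n = fst G t"
    "n' \<in> M" "D.dm n' = L'" "D.cd n' = fst G t" "\<psi> \<in> D.Ar" "D.dm \<psi> = L" "D.cd \<psi> = L'" "D.cp n' \<psi> = n"
    using \<open>g \<in> carr (C2 G)\<close> by (rule C2_arrE[OF G])
  have LK: "L = K'" and nm: "n = m'" using c f(1) g(1) by simp_all
  have mA: "m \<in> D.Ar" and m'A: "m' \<in> D.Ar" and n'A: "n' \<in> D.Ar" using f g M_sub by blast+
  have fc: "D.cd \<phi> = D.dm m'" using f by simp
  have gc: "D.cd \<psi> = D.dm n'" using g by simp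
  have gf: "D.cp \<psi> \<phi> \<in> D.Ar" "D.dm (D.cp \<psi> \<phi>) = K" "D.cd (D.cp \<psi> \<phi>) = D.dm n'"
    using f g LK by simp_all
  have gfe: "D.cp n' (D.cp \<psi> \<phi>) = m"
  proof -
    have "D.cp n' (D.cp \<psi> \<phi>) = D.cp (D.cp n' \<psi>) \<phi>" using f g LK n'A by (intro D.assoc) simp_all
    then show ?thesis using f g nm by simp
  qed
  note P1' = ind_prems[OF f(2-4) f(5,7) f(8,9) fc f(11)]
  have g': "D.dm \<psi> = K'" "D.cp n' \<psi> = m'" using g LK nm by simp_all
  have m'K: "D.dm m' = K'" using f by simp
  note P2' = ind_prems[OF f(5) m'K f(7) g(5,7) g(8) g'(1) gc g'(2)]
  note P3' = ind_prems[OF f(2-4) g(5,7) gf(1,2,3) gfe]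
  note I1 = ind[OF G P1'(2) f(7) P1'(3) f(8) P1'(4) fc P1'(5)]
  note N1 = ind_NT[OF G P1'(2) f(7) P1'(3) f(8) P1'(4) fc P1'(5)]
  note I2 = ind[OF G P2'(2) g(7) P2'(3) g(8) P2'(4) gc P2'(5)]
  note N2 = ind_NT[OF G P2'(2) g(7) P2'(3) g(8) P2'(4) gc P2'(5)]
  note N3 = ind_NT[OF G P3'(2) g(7) P3'(3) gf(1) P3'(4) gf(3) P3'(5)]
  let ?i1 = "ind G m' (PBF G m) (qt G m) \<phi>" and ?i2 = "ind G n' (PBF G m') (qt G m') \<psi>"
    and ?i3 = "ind G n' (PBF G m) (qt G m) (D.cp \<psi> \<phi>)"
  have eq: "?i3 = (\<lambda>y. if y \<in> A.Ob then D.cp (?i2 y) (?i1 y) else undefined)"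
  proof (rule NT_eqI[OF N3 NT_comp[OF N1 N2]])
    fix y assume y: "y \<in> A.Ob"
    note i1 = I1[OF y] and i2 = I2[OF y]
    have "D.cp (?i2 y) (?i1 y) = ?i3 y"
    proof (rule ind_unique[OF G P3'(2) g(7) P3'(3) gf(1) P3'(4) gf(3) P3'(5) y])
      show "D.cp (pp G n' y) (D.cp (?i2 y) (?i1 y)) = D.cp (D.cp \<psi> \<phi>) (snd (PBF G m) (bang y))"
      proof -
        have "D.cp (pp G n' y) (D.cp (?i2 y) (?i1 y)) = D.cp (D.cp (pp G n' y) (?i2 y)) (?i1 y)"
          using i1 i2 pp_hom[OF G n'A g(7) y] by (intro D.assoc) (simp_all add: PBF_simps[OF G m'A f(7)])
        also have "\<dots> = D.cp (D.cp \<psi> (pp G m' y)) (?i1 y)"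
          using i2 P1_bang[OF G m'A f(7) y] by (simp add: PBF_simps[OF G m'A f(7)])
        also have "\<dots> = D.cp \<psi> (D.cp (pp G m' y) (?i1 y))"
          using i1 g pp_hom[OF G m'A f(7) y] LK m'K by (intro D.assoc[symmetric]) simp_all
        also have "\<dots> = D.cp \<psi> (D.cp \<phi> (pp G m y))"
          using i1 P1_bang[OF G mA f(4) y] by (simp add: PBF_simps[OF G mA f(4)])
        also have "\<dots> = D.cp (D.cp \<psi> \<phi>) (pp G m y)"
          using f g LK pp_hom[OF G mA f(4) y] by (intro D.assoc) simp_all
        finally show ?thesis using P1_bang[OF G mA f(4) y] by (simp add: PBF_simps[OF G mA f(4)])
      qed
      show "D.cp (pq G n' y) (D.cp (?i2 y) (?i1 y)) = qt G m y"
      proof -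
        have "D.cp (pq G n' y) (D.cp (?i2 y) (?i1 y)) = D.cp (D.cp (pq G n' y) (?i2 y)) (?i1 y)"
          using i1 i2 pq_hom[OF G n'A g(7) y] by (intro D.assoc) (simp_all add: PBF_simps[OF G m'A f(7)])
        also have "\<dots> = D.cp (pq G m' y) (?i1 y)" using i2 y by (simp add: qt_def[of G m' y])
        also have "\<dots> = qt G m y" using i1 by simp
        finally show ?thesis .
      qed
    qed (use i1 i2 in \<open>simp_all add: PBF_simps[OF G m'A f(7)]\<close>)
    then show "?i3 y = (if y \<in> A.Ob then D.cp (?i2 y) (?i1 y) else undefined)" using y by simp
  qed
  show "Ga G (ccomp (C2 G) g f) = ccomp (C1 G) (Ga G g) (Ga G f)"
    unfolding f(1) g(1) LK nm using eq by simp
qed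

end

end


context ctx3
begin

context
  fixes G assumes G: "isF G"
begin

lemma eps_nat: "nat_iso_maps (C2 G) (C2 G) (Fo \<circ> Go G) (Fa \<circ> Ga G) (\<lambda>x. x) (\<lambda>f. f) (eps G)"
  unfolding nat_iso_maps_def nat_trans_maps_def
proof (intro conjI ballI)
  fix x assume "x \<in> cobj (C2 G)"
  then obtain K m where x: "x = (K, m)" "m \<in> M" "D.dm m = K" "D.cd m = fst G t" by (rule C2_objE[OF G])
  have mA: "m \<in> D.Ar" using x M_sub by blast
  have K: "K \<in> D.Ob" using mA x by auto
  have e: "eps G x = ((K, m), (K, m), D.idc K)" unfolding x(1) eps_def by simp
  have mem: "((K, m), (K, m), D.idc K) \<in> carr (C2 G)"
    unfolding slice_arr_iff using x mA K by simp
  show "eps G x \<in> carr (C2 G)" unfolding e by (rule mem)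
  show "cdom (C2 G) (eps G x) = (Fo \<circ> Go G) x" unfolding e using FoGo[OF G x(2-4)] x(1) by simp
  show "ccod (C2 G) (eps G x) = x" unfolding e using x(1) by simp
  show "is_iso (C2 G) (eps G x)" unfolding e
    by (rule D.slice_iso[OF mem D.id_iso[OF K] M_sub])
next
  fix f assume "f \<in> carr (C2 G)"
  then obtain K m K' m' \<phi> where f: "f = ((K, m), (K', m'), \<phi>)" "m \<in> M" "D.dm m = K" "D.cd m = fst G t"
    "m' \<in> M" "D.dm m' = K'" "D.cd m' = fst G t" "\<phi> \<in> D.Ar" "D.dm \<phi> = K" "D.cd \<phi> = K'" "D.cp m' \<phi> = m"
    by (rule C2_arrE[OF G])
  have fc: "D.cd \<phi> = D.dm m'" using f by simp
  note P = ind_prems[OF G f(2-4) f(5,7) f(8,9) fc f(11)]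
  have it: "ind G m' (PBF G m) (qt G m) \<phi> t = \<phi>"
    by (rule ind_t[OF G P(2) f(7) P(3) f(8) P(4) fc P(5)])
  have FG: "(Fa \<circ> Ga G) f = f"
    unfolding f(1) using it FoGo[OF G f(2-4)] FoGo[OF G f(5-7)] by simp
  have e1: "eps G (K', m') = ((K', m'), (K', m'), D.idc K')" unfolding eps_def by simp
  have e2: "eps G (K, m) = ((K, m), (K, m), D.idc K)" unfolding eps_def by simp
  show "ccomp (C2 G) (eps G (ccod (C2 G) f)) ((Fa \<circ> Ga G) f) = ccomp (C2 G) f (eps G (cdom (C2 G) f))"
    unfolding FG unfolding f(1) slice_cd slice_dm e1 e2 using f by simp
qed

lemma eta_data: assumes S: "NT S G \<sigma>" "cart S G \<sigma>" "\<sigma> t \<in> M"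
  shows "\<sigma> t \<in> D.Ar" "D.cd (\<sigma> t) = fst G t" "D.idc (fst S t) \<in> D.Ar" "D.dm (D.idc (fst S t)) = fst S t"
    "D.cd (D.idc (fst S t)) = D.dm (\<sigma> t)" "D.cp (\<sigma> t) (D.idc (fst S t)) = \<sigma> t"
proof -
  have F: "isF S" using S NT_F by blast
  show "\<sigma> t \<in> D.Ar" "D.cd (\<sigma> t) = fst G t" using S by simp_all
  show "D.idc (fst S t) \<in> D.Ar" "D.dm (D.idc (fst S t)) = fst S t" "D.cd (D.idc (fst S t)) = D.dm (\<sigma> t)"
    "D.cp (\<sigma> t) (D.idc (fst S t)) = \<sigma> t" using S F by simp_all
qed

lemma eta_arr: assumes S: "NT S G \<sigma>" "cart S G \<sigma>" "\<sigma> t \<in> M"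
  shows "((S, (S, G, \<sigma>)), (PBF G (\<sigma> t), (PBF G (\<sigma> t), G, qt G (\<sigma> t))),
      (S, PBF G (\<sigma> t), ind G (\<sigma> t) S \<sigma> (D.idc (fst S t)))) \<in> carr (C1 G)"
proof -
  note d = eta_data[OF S]
  note I = ind_NT[OF G d(1,2) S(1) d(3,4,5,6)] and Ii = ind[OF G d(1,2) S(1) d(3,4,5,6)]
  show ?thesis
  proof (rule C1_arrI[OF G S])
    show "NT (PBF G (\<sigma> t)) G (qt G (\<sigma> t))" by (rule qt_NT[OF G d(1,2)])
    show "cart (PBF G (\<sigma> t)) G (qt G (\<sigma> t))" using qt_cart[OF G d(1,2)] by (simp add: cart_iff)
    show "qt G (\<sigma> t) t \<in> M" using qt_t[OF G d(1,2)] S by simp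
    show "NT S (PBF G (\<sigma> t)) (ind G (\<sigma> t) S \<sigma> (D.idc (fst S t)))" by (rule I)
    fix y assume y: "y \<in> A.Ob"
    show "D.cp (qt G (\<sigma> t) y) (ind G (\<sigma> t) S \<sigma> (D.idc (fst S t)) y) = \<sigma> y"
      using Ii(5)[OF y] y by (simp add: qt_def[of G "\<sigma> t" y])
  qed
qed

lemma eta_iso: assumes S: "NT S G \<sigma>" "cart S G \<sigma>" "\<sigma> t \<in> M"
  shows "is_iso FC (S, PBF G (\<sigma> t), ind G (\<sigma> t) S \<sigma> (D.idc (fst S t)))"
proof -
  note d = eta_data[OF S]
  note I = ind_NT[OF G d(1,2) S(1) d(3,4,5,6)] and Ii = ind[OF G d(1,2) S(1) d(3,4,5,6)]
  have F: "isF S" using S NT_F by blast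
  show ?thesis
  proof (rule FC_iso_intro[OF I])
    fix y assume y: "y \<in> A.Ob"
    note b = bang[OF y]
    show "is_iso D (ind G (\<sigma> t) S \<sigma> (D.idc (fst S t)) y)"
    proof (rule D.pb_compare_iso[OF pb_at[OF G d(1,2) y] cart_bang[OF S(1,2) y]])
      show "D.cp (pp G (\<sigma> t) y) (ind G (\<sigma> t) S \<sigma> (D.idc (fst S t)) y) = snd S (bang y)"
        using Ii(4)[OF y] F b by simp
      show "D.cp (pq G (\<sigma> t) y) (ind G (\<sigma> t) S \<sigma> (D.idc (fst S t)) y) = \<sigma> y"
        using Ii(5)[OF y] .
    qed (use Ii[OF y] F b pp_hom[OF G d(1,2) y] in simp_all)
  qed
qed

lemma eta_nat: "nat_iso_maps (C1 G) (C1 G) (\<lambda>x. x) (\<lambda>f. f) (Go G \<circ> Fo) (Ga G \<circ> Fa) (eta G)"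
  unfolding nat_iso_maps_def nat_trans_maps_def
proof (intro conjI ballI)
  fix x assume "x \<in> cobj (C1 G)"
  then obtain S \<sigma> where x: "x = (S, (S, G, \<sigma>))" "NT S G \<sigma>" "cart S G \<sigma>" "\<sigma> t \<in> M" by (rule C1_objE[OF G])
  have mem: "eta G x \<in> carr (C1 G)" unfolding x(1) eta_simp Go_simp by (rule eta_arr[OF x(2-4)])
  show "eta G x \<in> carr (C1 G)" by (rule mem)
  show "cdom (C1 G) (eta G x) = x" unfolding x(1) eta_simp by simp
  show "ccod (C1 G) (eta G x) = (Go G \<circ> Fo) x" unfolding x(1) eta_simp by simp
  have sub: "M' \<subseteq> carr FC" unfolding lifted_M_def by (rule subsetI) (erule CollectE, erule conjE)
  show "is_iso (C1 G) (eta G x)" using mem unfolding x(1) eta_simp Go_simp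
    by (intro FC.slice_iso[OF _ eta_iso[OF x(2-4)] sub])
next
  fix f assume "f \<in> carr (C1 G)"
  then obtain S \<sigma> S' \<sigma>' \<phi> where f: "f = ((S, (S, G, \<sigma>)), (S', (S', G, \<sigma>')), (S, S', \<phi>))"
    and S: "NT S G \<sigma>" "cart S G \<sigma>" "\<sigma> t \<in> M" and S': "NT S' G \<sigma>'" "cart S' G \<sigma>'" "\<sigma>' t \<in> M"
    and ph: "NT S S' \<phi>" and c: "\<And>y. y \<in> A.Ob \<Longrightarrow> D.cp (\<sigma>' y) (\<phi> y) = \<sigma> y"
    by (rule C1_arrE[OF G]) (rule that; assumption)
  have FS: "isF S" and FS': "isF S'" using S S' NT_F by blast+
  note d = eta_data[OF S] and d' = eta_data[OF S']
  let ?m = "\<sigma> t" and ?m' = "\<sigma>' t"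
  let ?i = "ind G ?m S \<sigma> (D.idc (fst S t))" and ?i' = "ind G ?m' S' \<sigma>' (D.idc (fst S' t))"
  let ?g = "ind G ?m' (PBF G ?m) (qt G ?m) (\<phi> t)"
  let ?J = "ind G ?m' S \<sigma> (\<phi> t)"
  note Ii = ind[OF G d(1,2) S(1) d(3,4,5,6)] and Ii' = ind[OF G d'(1,2) S'(1) d'(3,4,5,6)]
  have ct: "D.cp ?m' (\<phi> t) = ?m" using c[OF t_obj] .
  have pht: "\<phi> t \<in> D.Ar" "D.dm (\<phi> t) = fst S t" "D.cd (\<phi> t) = D.dm ?m'" using ph S' by simp_all
  have mM: "?m \<in> M" "D.dm ?m = fst S t" "D.cd ?m = fst G t" using S by simp_all
  have mM': "?m' \<in> M" "D.cd ?m' = fst G t" using S' by simp_all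
  note Pg = ind_prems[OF G mM mM' pht(1,2,3) ct]
  note Ig = ind[OF G Pg(2) mM'(2) Pg(3) pht(1) Pg(4) pht(3) Pg(5)]
  note JJ = ind_unique[OF G d'(1,2) S(1) pht(1,2,3) ct]
  have L: "(\<lambda>y. if y \<in> A.Ob then D.cp (?i' y) (\<phi> y) else undefined) =
           (\<lambda>y. if y \<in> A.Ob then D.cp (?g y) (?i y) else undefined)"
  proof (rule ext)
    fix y
    show "(if y \<in> A.Ob then D.cp (?i' y) (\<phi> y) else undefined) = (if y \<in> A.Ob then D.cp (?g y) (?i y) else undefined)"
    proof (cases "y \<in> A.Ob")
      case y: True
      note b = bang[OF y]
      note i = Ii[OF y] and i' = Ii'[OF y] and g = Ig[OF y]
      have ppb: "snd (PBF G ?m) (bang y) = pp G ?m y" using P1_bang[OF G d(1,2) y] by (simp add: PBF_simps[OF G d(1,2)])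
      have v1: "D.cp (?i' y) (\<phi> y) = ?J y"
      proof (rule JJ[OF y])
        show "D.cp (pp G ?m' y) (D.cp (?i' y) (\<phi> y)) = D.cp (\<phi> t) (snd S (bang y))"
        proof -
          have "D.cp (pp G ?m' y) (D.cp (?i' y) (\<phi> y)) = D.cp (D.cp (pp G ?m' y) (?i' y)) (\<phi> y)"
            using i' ph y pp_hom[OF G d'(1,2) y] by (intro D.assoc) simp_all
          also have "\<dots> = D.cp (snd S' (bang y)) (\<phi> y)" using i'(4) FS' b by simp
          also have "\<dots> = D.cp (\<phi> t) (snd S (bang y))" using NT_nat[OF ph b(1)] b by simp
          finally show ?thesis .
        qed
        show "D.cp (pq G ?m' y) (D.cp (?i' y) (\<phi> y)) = \<sigma> y"
        proof -
          have "D.cp (pq G ?m' y) (D.cp (?i' y) (\<phi> y)) = D.cp (D.cp (pq G ?m' y) (?i' y)) (\<phi> y)"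
            using i' ph y pq_hom[OF G d'(1,2) y] by (intro D.assoc) simp_all
          also have "\<dots> = \<sigma> y" using i'(5) c[OF y] by simp
          finally show ?thesis .
        qed
      qed (use i' ph y in simp_all)
      have v2: "D.cp (?g y) (?i y) = ?J y"
      proof (rule JJ[OF y])
        show "D.cp (pp G ?m' y) (D.cp (?g y) (?i y)) = D.cp (\<phi> t) (snd S (bang y))"
        proof -
          have "D.cp (pp G ?m' y) (D.cp (?g y) (?i y)) = D.cp (D.cp (pp G ?m' y) (?g y)) (?i y)"
            using g i y pp_hom[OF G d'(1,2) y] by (intro D.assoc) (simp_all add: PBF_simps[OF G d(1,2)])
          also have "\<dots> = D.cp (D.cp (\<phi> t) (pp G ?m y)) (?i y)" using g(4) ppb by simp
          also have "\<dots> = D.cp (\<phi> t) (D.cp (pp G ?m y) (?i y))"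
            using i pht pp_hom[OF G d(1,2) y] mM by (intro D.assoc[symmetric]) simp_all
          also have "\<dots> = D.cp (\<phi> t) (snd S (bang y))" using i(4) FS b by simp
          finally show ?thesis .
        qed
        show "D.cp (pq G ?m' y) (D.cp (?g y) (?i y)) = \<sigma> y"
        proof -
          have "D.cp (pq G ?m' y) (D.cp (?g y) (?i y)) = D.cp (D.cp (pq G ?m' y) (?g y)) (?i y)"
            using g i y pq_hom[OF G d'(1,2) y] by (intro D.assoc) (simp_all add: PBF_simps[OF G d(1,2)])
          also have "\<dots> = D.cp (pq G ?m y) (?i y)" using g(5) y by (simp add: qt_def[of G ?m y])
          also have "\<dots> = \<sigma> y" using i(5) .
          finally show ?thesis .
        qed
      qed (use g i in \<open>simp_all add: PBF_simps[OF G d(1,2)]\<close>)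
      show ?thesis using v1 v2 y by simp
    qed simp
  qed
  show "ccomp (C1 G) (eta G (ccod (C1 G) f)) f = ccomp (C1 G) ((Ga G \<circ> Fa) f) (eta G (cdom (C1 G) f))"
    unfolding f slice_cd slice_dm eta_simp comp_def Fa_simp Fo_simp Ga_simp Go_simp slice_comp FC_comp
    using L by simp
qed

end

end

theorem lemma4p2:
  fixes D :: "('oD, 'aD) category" and A :: "('oA, 'aA) category"
    and E M :: "'aD set" and t :: 'oA
  assumes "is_category D" and "has_pullbacks D" and "is_ofs D E M"
    and "is_category A" and "is_terminal A t"
  shows "is_ofs (functor_cat A D) (lifted_E A D t E) (lifted_M A D t M) \<and>
         (\<forall>G\<in>cobj (functor_cat A D).
            equivalent_categories (slice (functor_cat A D) (lifted_M A D t M) G)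
                                  (slice D M (fst G t)))"
proof -
  interpret X: ctx3 D A t E M
    by (unfold_locales; (rule assms)?)
  show ?thesis
  proof (intro conjI ballI)
    show "is_ofs (functor_cat A D) (lifted_E A D t E) (lifted_M A D t M)" by (rule X.FC_ofs)
  next
    fix G assume "G \<in> cobj (functor_cat A D)"
    then have G: "is_functor A D G" by simp
    show "equivalent_categories (slice (functor_cat A D) (lifted_M A D t M) G) (slice D M (fst G t))"
      unfolding equivalent_categories_def
      by (intro exI[of _ X.Fo] exI[of _ X.Fa] exI[of _ "X.Go G"] exI[of _ "X.Ga G"] exI[of _ "X.eta G"]
          exI[of _ "X.eps G"] conjI X.FoFa[OF G] X.GoGa[OF G] X.eta_nat[OF G] X.eps_nat[OF G])
  qed
qed

end
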